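(* Let $k\ge 0$ be an integer. Assume that $f$ satisfies conditions (A1), (A2), (A3) and (A4) below (all with this $k$), and let $\bar\lambda_k=\lambda+\frac{2\tau_k\mathsf D^k}{k!}\mathbb 1\{k\ge 1\}$. Let $x^*\in X$ be a $(\tfrac16\varepsilon,2\bar\lambda_k)$-FOSP of the surrogate problem $\min_{x\in X}\max_{y\in Y}\hat f_k(x,y)$, where $\hat y\in Y$ is an arbitrary expansion center. Then $x^*$ is an $(\varepsilon,2\bar\lambda_k)$-FOSP of the problem $\min_{x\in X}\max_{y\in Y}f(x,y)$, provided that $$\min\Big\{\mu\mathsf D,\;2\sigma_0,\;\sqrt{\tfrac{\lambda\rho_0\mathsf D}{50}}\Big\}\le\frac{\varepsilon}{24}\quad\text{when }k=0,$$ and $$\min\Big\{\mu\mathsf D+\frac{2\sigma_k\mathsf D^k}{k!},\;\sqrt{\frac{\bar\lambda_k\rho_k\mathsf D^{k+1}}{50\cdot(k+1)!}}\Big\}\le\frac{\varepsilon}{24}\quad\text{when }k\ge 1.$$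
   Context: Let $E_x,E_y$ be finite-dimensional Euclidean spaces with Euclidean norms $\|\cdot\|$; for tensors (multilinear forms) of partial derivatives, $\|\cdot\|$ denotes the operator norm induced by the Euclidean norms. Let $X\subseteq E_x$ and $Y\subseteq E_y$ be convex sets with nonempty interior, with $Y$ compact, and let $\mathsf D\ge\mathrm{diam}(Y)=\max_{y,y'\in Y}\|y-y'\|$. Let $f:X\times Y\to\mathbb R$. Write $\nabla^k_{y\cdots y}f$ for the tensor of $k$-th order partial derivatives in $y$, and $\nabla^{k+1}_{xy\cdots y}f$, $\nabla^{k+2}_{xxy\cdots y}f$ for the tensors with additionally one, respectively two, partial derivatives in $x$. (A1) $\nabla_x f$ exists on $X\times Y$ and $\|\nabla_x f(x',y')-\nabla_x f(x,y)\|\le\lambda\|x'-x\|+\mu\|y'-y\|$ for all $x,x'\in X$, $y,y'\in Y$, with $\lambda>0,\mu\ge0$. (A2) $\nabla^k_{y\cdots y}f$ exists on $X\times Y$ and $\|\nabla^k_{y\cdots y}f(x',y')-\nabla^k_{y\cdots y}f(x,y)\|\le\rho_k\|y'-y\|+\sigma_k\|x'-x\|$ for all $x,x',y,y'$, with $\rho_k,\sigma_k\ge0$. (A3) $\nabla^{k+1}_{xy\cdots y}f$ exists on $X\times Y$ and $\|\nabla^{k+1}_{xy\cdots y}f(x',y)-\nabla^{k+1}_{xy\cdots y}f(x,y)\|\le\tau_k\|x'-x\|$ for all $x,x'\in X$, $y\in Y$, with $\tau_k\ge0$. (A4) Letting $Y'_x\subseteq Y$ be the set of $y$ at which $\nabla^{k+2}_{xxy\cdots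 y}f(x,y)$ does not exist, the set $\{(x,y):x\in X,\,y\in Y'_x\}$ is Lebesgue measurable. For fixed $\hat y\in Y$, the $k$-th order Taylor approximation is $\hat f_k(x,y)=\sum_{j=0}^k\frac1{j!}\nabla^j_{y\cdots y}f(x,\hat y)[(y-\hat y)^j]$, where $T[v^j]=T[v,\dots,v]$. A function $\phi:X\to\mathbb R$ is $\lambda$-weakly convex if $\phi+\frac\lambda2\|\cdot\|^2$ is convex; for such $\phi$ and $\lambda'>\lambda$ its Moreau envelope is $\phi_{\lambda'}(x)=\min_{u\in X}\{\phi(u)+\frac{\lambda'}{2}\|u-x\|^2\}$ (a differentiable function). For a min-max problem $\min_{x\in X}\max_{y\in Y}g(x,y)$ with primal function $\psi(x)=\max_{y\in Y}g(x,y)$, a point $x\in X$ is an $(\varepsilon,\lambda')$-first-order stationary point ($(\varepsilon,\lambda')$-FOSP) if $\|\nabla\psi_{\lambda'}(x)\|\le\varepsilon$. *)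

theory Defs
  imports "HOL-Analysis.Analysis"
begin

text \<open>Tensors (multilinear forms) in the y-variable are represented as functions on lists
of vectors; a k-linear form is evaluated on lists of length k.\<close>

definition tnorm :: "nat \<Rightarrow> ('b::real_normed_vector list \<Rightarrow> 'c::real_normed_vector) \<Rightarrow> real" where
  "tnorm k T = (SUP vs \<in> {vs. length vs = k \<and> (\<forall>v\<in>set vs. norm v \<le> 1)}. norm (T vs))"

definition y_derivs ::
  "'a set \<Rightarrow> 'b::real_normed_vector set \<Rightarrow> ('a \<Rightarrow> 'b \<Rightarrow> real) \<Rightarrow> nat
     \<Rightarrow> (nat \<Rightarrow> 'a \<Rightarrow> 'b \<Rightarrow> 'b list \<Rightarrow> real) \<Rightarrow> bool" where
  "y_derivs X Y f k D \<longleftrightarrow>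
     (\<forall>x\<in>X. \<forall>y\<in>Y. D 0 x y [] = f x y) \<and>
     (\<forall>j<k. \<forall>x\<in>X. \<forall>y\<in>Y. \<forall>vs. length vs = j \<longrightarrow>
        ((\<lambda>y'. D j x y' vs) has_derivative (\<lambda>v. D (Suc j) x y (v # vs))) (at y within Y))"

definition x_grad ::
  "'a::real_inner set \<Rightarrow> 'b set \<Rightarrow> ('a \<Rightarrow> 'b \<Rightarrow> real) \<Rightarrow> ('a \<Rightarrow> 'b \<Rightarrow> 'a) \<Rightarrow> bool" where
  "x_grad X Y g G \<longleftrightarrow>
     (\<forall>x\<in>X. \<forall>y\<in>Y. ((\<lambda>x'. g x' y) has_derivative (\<lambda>u. G x y \<bullet> u)) (at x within X))"

definition xy_deriv ::
  "'a::real_inner set \<Rightarrow> 'b set \<Rightarrow> nat \<Rightarrow> ('a \<Rightarrow> 'b \<Rightarrow> 'b list \<Rightarrow> real)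
     \<Rightarrow> ('a \<Rightarrow> 'b \<Rightarrow> 'b list \<Rightarrow> 'a) \<Rightarrow> bool" where
  "xy_deriv X Y k Dk Dx \<longleftrightarrow>
     (\<forall>x\<in>X. \<forall>y\<in>Y. \<forall>vs. length vs = k \<longrightarrow>
        ((\<lambda>x'. Dk x' y vs) has_derivative (\<lambda>u. Dx x y vs \<bullet> u)) (at x within X))"

definition xxy_exists ::
  "'a::real_normed_vector set \<Rightarrow> nat \<Rightarrow> ('a \<Rightarrow> 'b \<Rightarrow> 'b list \<Rightarrow> 'a) \<Rightarrow> 'a \<Rightarrow> 'b \<Rightarrow> bool" where
  "xxy_exists X k Dx x y \<longleftrightarrow>
     (\<forall>vs. length vs = k \<longrightarrow> (\<lambda>x'. Dx x' y vs) differentiable (at x within X))"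

definition taylor_approx ::
  "(nat \<Rightarrow> 'a \<Rightarrow> 'b::real_normed_vector \<Rightarrow> 'b list \<Rightarrow> real) \<Rightarrow> nat \<Rightarrow> 'b \<Rightarrow> 'a \<Rightarrow> 'b \<Rightarrow> real" where
  "taylor_approx D k yhat x y = (\<Sum>j\<le>k. D j x yhat (replicate j (y - yhat)) / fact j)"

definition primal :: "'b set \<Rightarrow> ('a \<Rightarrow> 'b \<Rightarrow> real) \<Rightarrow> 'a \<Rightarrow> real" where
  "primal Y g x = (SUP y\<in>Y. g x y)"

definition moreau :: "'a::real_normed_vector set \<Rightarrow> ('a \<Rightarrow> real) \<Rightarrow> real \<Rightarrow> 'a \<Rightarrow> real" where
  "moreau X \<phi> l x = (INF u\<in>X. \<phi> u + l / 2 * (norm (u - x))\<^sup>2)"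

definition is_fosp ::
  "'a::real_inner set \<Rightarrow> 'b set \<Rightarrow> ('a \<Rightarrow> 'b \<Rightarrow> real) \<Rightarrow> real \<Rightarrow> real \<Rightarrow> 'a \<Rightarrow> bool" where
  "is_fosp X Y g eps l x \<longleftrightarrow> x \<in> X \<and>
     (\<exists>G. (moreau X (primal Y g) l has_derivative (\<lambda>h. G \<bullet> h)) (at x) \<and> norm G \<le> eps)"

end

theory Submission
  imports Defs
begin


lemma mono01:
  fixes \<phi> \<psi> \<phi>' \<psi>' :: "real \<Rightarrow> real"
  assumes d1: "\<forall>t\<in>{0..1}. (\<phi> has_real_derivative \<phi>' t) (at t within {0..1})"
    and d2: "\<forall>t\<in>{0..1}. (\<psi> has_real_derivative \<psi>' t) (at t within {0..1})"
    and b: "\<forall>t\<in>{0..1}. \<bar>\<phi>' t\<bar> \<le> \<psi>' t" and z1: "\<phi> 0 = 0" and z2: "\<psi> 0 = 0" and t: "t \<in> {0..1}"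
  shows "\<bar>\<phi> t\<bar> \<le> \<psi> t"
proof -
  have sub: "{0..t} \<subseteq> {0..1}" using t by auto
  have A: "\<exists>x\<in>{0..t}. (\<psi> t + s * \<phi> t) - (\<psi> 0 + s * \<phi> 0) = (t - 0) * (\<psi>' x + s * \<phi>' x)" for s :: real
  proof -
    have "\<exists>x\<in>{0..t}. (\<psi> t + s * \<phi> t) - (\<psi> 0 + s * \<phi> 0) = (\<lambda>d. (\<psi>' x + s * \<phi>' x) * d) (t - 0)"
    proof (rule mvt_very_simple[where f="\<lambda>x. \<psi> x + s * \<phi> x"])
      show "0 \<le> t" using t by auto
      fix x assume x: "0 \<le> x" "x \<le> t"
      then have x1: "x \<in> {0..1}" using t by auto
      have "((\<lambda>x. \<psi> x + s * \<phi> x) has_real_derivative (\<psi>' x + s * \<phi>' x)) (at x within {0..1})"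
        using d1 d2 x1 by (auto intro!: derivative_eq_intros)
      then have "((\<lambda>x. \<psi> x + s * \<phi> x) has_real_derivative (\<psi>' x + s * \<phi>' x)) (at x within {0..t})"
        using has_field_derivative_subset sub by blast
      then show "((\<lambda>x. \<psi> x + s * \<phi> x) has_derivative (\<lambda>d. (\<psi>' x + s * \<phi>' x) * d)) (at x within {0..t})"
        by (simp add: has_field_derivative_def)
    qed
    then show ?thesis by (simp add: mult.commute)
  qed
  obtain x1 where x1: "x1 \<in> {0..t}" "(\<psi> t + 1 * \<phi> t) - (\<psi> 0 + 1 * \<phi> 0) = (t - 0) * (\<psi>' x1 + 1 * \<phi>' x1)"
    using A[of 1] by blast
  obtain x2 where x2: "x2 \<in> {0..t}" "(\<psi> t + (-1) * \<phi> t) - (\<psi> 0 + (-1) * \<phi> 0) = (t - 0) * (\<psi>' x2 + (-1) * \<phi>' x2)"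
    using A[of "-1"] by blast
  have "x1 \<in> {0..1}" "x2 \<in> {0..1}" using x1 x2 sub by auto
  then have "\<bar>\<phi>' x1\<bar> \<le> \<psi>' x1" "\<bar>\<phi>' x2\<bar> \<le> \<psi>' x2" using b by auto
  moreover have "t \<ge> 0" using t by auto
  ultimately have "0 \<le> t * (\<psi>' x1 + \<phi>' x1)" "0 \<le> t * (\<psi>' x2 - \<phi>' x2)" by (auto intro!: mult_nonneg_nonneg)
  then show ?thesis using x1(2) x2(2) z1 z2 by auto
qed



lemma taylor_1d:
  fixes g :: "nat \<Rightarrow> real \<Rightarrow> real"
  assumes "\<forall>j<k. \<forall>t\<in>{0..1}. (g j has_real_derivative g (Suc j) t) (at t within {0..1})"
    and "\<forall>t\<in>{0..1}. \<bar>g k t - g k 0\<bar> \<le> B + C * t"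
  shows "\<forall>t\<in>{0..1}. \<bar>g 0 t - (\<Sum>j\<le>k. g j 0 * t^j / fact j)\<bar> \<le> B * t^k / fact k + C * t^(Suc k) / fact (Suc k)"
  using assms
proof (induction k arbitrary: g)
  case 0
  then show ?case by simp
next
  case (Suc k)
  have IH: "\<forall>t\<in>{0..1}. \<bar>g 1 t - (\<Sum>j\<le>k. g (Suc j) 0 * t^j / fact j)\<bar> \<le> B * t^k / fact k + C * t^(Suc k) / fact (Suc k)"
    using Suc.IH[of "\<lambda>j. g (Suc j)"] Suc.prems by auto
  define \<phi> where "\<phi> t = g 0 t - (\<Sum>j\<le>Suc k. g j 0 * t^j / fact j)" for t
  define \<phi>' where "\<phi>' t = g 1 t - (\<Sum>j\<le>k. g (Suc j) 0 * t^j / fact j)" for t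
  define \<psi> where "\<psi> t = B * t^(Suc k) / fact (Suc k) + C * t^(Suc (Suc k)) / fact (Suc (Suc k))" for t :: real
  define \<psi>' where "\<psi>' t = B * t^k / fact k + C * t^(Suc k) / fact (Suc k)" for t :: real
  have poly: "((\<lambda>t. \<Sum>j\<le>Suc k. g j 0 * t^j / fact j) has_real_derivative (\<Sum>j\<le>k. g (Suc j) 0 * t^j / fact j)) (at t within {0..1})" for t
  proof -
    have e: "(\<lambda>t. \<Sum>j\<le>Suc k. g j 0 * t^j / fact j) = (\<lambda>t. g 0 0 + (\<Sum>j\<le>k. g (Suc j) 0 * t^(Suc j) / fact (Suc j)))"
      by (rule ext, subst sum.atMost_Suc_shift, simp)
    have each: "((\<lambda>t. g (Suc j) 0 * t^(Suc j) / fact (Suc j)) has_real_derivative g (Suc j) 0 * t^j / fact j) (at t within {0..1})" for j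
    proof -
      have "((\<lambda>t. t^(Suc j)) has_real_derivative of_nat (Suc j) * t^j) (at t within {0..1})"
        using DERIV_pow[of "Suc j"] by simp
      then have "((\<lambda>t. g (Suc j) 0 * t^(Suc j) / fact (Suc j)) has_real_derivative g (Suc j) 0 * (of_nat (Suc j) * t^j) / fact (Suc j)) (at t within {0..1})"
        by (intro DERIV_cdivide DERIV_cmult)
      moreover have "g (Suc j) 0 * (of_nat (Suc j) * t^j) / fact (Suc j) = g (Suc j) 0 * t^j / fact j"
        by (simp add: fact_Suc del: of_nat_Suc)
      ultimately show ?thesis by simp
    qed
    have "((\<lambda>t. g 0 0 + (\<Sum>j\<le>k. g (Suc j) 0 * t^(Suc j) / fact (Suc j))) has_real_derivative
       (0 + (\<Sum>j\<le>k. g (Suc j) 0 * t^j / fact j))) (at t within {0..1})"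
      by (intro DERIV_add DERIV_const DERIV_sum each)
    then show ?thesis using e by simp
  qed
  have d1: "\<forall>t\<in>{0..1}. (\<phi> has_real_derivative \<phi>' t) (at t within {0..1})"
  proof
    fix t :: real assume t: "t \<in> {0..1}"
    have "(g 0 has_real_derivative g 1 t) (at t within {0..1})" using Suc.prems(1) t by auto
    then show "(\<phi> has_real_derivative \<phi>' t) (at t within {0..1})"
      unfolding \<phi>_def[abs_def] \<phi>'_def using poly[of t] by (intro derivative_intros) auto
  qed
  have d2: "\<forall>t\<in>{0..1}. (\<psi> has_real_derivative \<psi>' t) (at t within {0..1})"
  proof
    fix t :: real assume t: "t \<in> {0..1}"
    have "(\<psi> has_real_derivative (B * (of_nat (Suc k) * t^k) / fact (Suc k) + C * (of_nat (Suc (Suc k)) * t^(Suc k)) / fact (Suc (Suc k)))) (at t within {0..1})"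
      unfolding \<psi>_def[abs_def] by (intro derivative_eq_intros) auto
    moreover have "B * (of_nat (Suc k) * t^k) / fact (Suc k) + C * (of_nat (Suc (Suc k)) * t^(Suc k)) / fact (Suc (Suc k)) = \<psi>' t"
      unfolding \<psi>'_def by (simp add: fact_Suc del: of_nat_Suc)
    ultimately show "(\<psi> has_real_derivative \<psi>' t) (at t within {0..1})" by simp
  qed
  have b: "\<forall>t\<in>{0..1}. \<bar>\<phi>' t\<bar> \<le> \<psi>' t" using IH unfolding \<phi>'_def \<psi>'_def by auto
  have z1: "\<phi> 0 = 0" unfolding \<phi>_def by (simp add: sum.atMost_Suc_shift)
  have z2: "\<psi> 0 = 0" unfolding \<psi>_def by simp
  show ?case
  proof
    fix t :: real assume t: "t \<in> {0..1}"
    show "\<bar>g 0 t - (\<Sum>j\<le>Suc k. g j 0 * t ^ j / fact j)\<bar> \<le> B * t ^ Suc k / fact (Suc k) + C * t ^ Suc (Suc k) / fact (Suc (Suc k))"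
      using mono01[OF d1 d2 b z1 z2 t] unfolding \<phi>_def \<psi>_def .
  qed
qed



lemma deriv_unique_convex:
  fixes S :: "'a::euclidean_space set" and g :: "'a \<Rightarrow> 'c::real_normed_vector"
  assumes cS: "convex S" and iS: "interior S \<noteq> {}" and y: "y \<in> S"
    and dA: "(g has_derivative A) (at y within S)" and dB: "(g has_derivative B) (at y within S)"
  shows "A = B"
proof -
  have lA: "linear A" using dA has_derivative_bounded_linear bounded_linear.linear by blast
  have lB: "linear B" using dB has_derivative_bounded_linear bounded_linear.linear by blast
  have seg: "A (w - y) = B (w - y)" if w: "w \<in> S" for w
  proof -
    define \<gamma> where "\<gamma> t = y + t *\<^sub>R (w - y)" for t :: real
    have im: "\<gamma> ` {0..1} \<subseteq> S"
    proof
      fix p assume "p \<in> \<gamma> ` {0..1}"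
      then obtain t where t: "t \<in> {0..1}" "p = \<gamma> t" by auto
      have "p = (1 - t) *\<^sub>R y + t *\<^sub>R w" using t by (simp add: \<gamma>_def algebra_simps)
      then show "p \<in> S" using cS y w t by (simp add: convex_def)
    qed
    have dg: "(\<gamma> has_derivative (\<lambda>t. t *\<^sub>R (w - y))) (at 0 within {0..1})"
      unfolding \<gamma>_def by (auto intro!: derivative_eq_intros)
    have g0: "\<gamma> 0 = y" by (simp add: \<gamma>_def)
    have "((\<lambda>t. g (\<gamma> t)) has_derivative (\<lambda>t. A (t *\<^sub>R (w - y)))) (at 0 within {0..1})"
      by (rule has_derivative_in_compose[OF dg]) (use has_derivative_subset[OF dA im] g0 in simp)
    moreover have "((\<lambda>t. g (\<gamma> t)) has_derivative (\<lambda>t. B (t *\<^sub>R (w - y)))) (at 0 within {0..1})"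
      by (rule has_derivative_in_compose[OF dg]) (use has_derivative_subset[OF dB im] g0 in simp)
    ultimately have "(\<lambda>t. A (t *\<^sub>R (w - y))) = (\<lambda>t. B (t *\<^sub>R (w - y)))"
      using frechet_derivative_unique_within_closed_interval[of "0::real" 1 0] by (auto simp: cbox_interval)
    then show ?thesis by (metis scaleR_one)
  qed
  obtain z where z: "z \<in> interior S" using iS by auto
  then obtain r where r: "r > 0" "ball z r \<subseteq> S" using mem_interior by blast
  show ?thesis
  proof
    fix h :: 'a
    define c where "c = r / 2 / (norm h + 1)"
    have c: "c > 0" unfolding c_def using r by (intro divide_pos_pos) (auto intro: add_nonneg_pos)
    have "norm (c *\<^sub>R h) < r"
    proof -
      have "norm (c *\<^sub>R h) = c * norm h" using c by simp
      also have "\<dots> = r / 2 * (norm h / (norm h + 1))" unfolding c_def by simp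
      also have "\<dots> \<le> r / 2 * 1"
        using r by (intro mult_left_mono) (auto simp: divide_le_eq_1 add_nonneg_pos)
      also have "\<dots> = r / 2" by simp
      finally show ?thesis using r by simp
    qed
    then have w2: "z + c *\<^sub>R h \<in> S" using r by (auto simp: dist_norm)
    have w1: "z \<in> S" using r by auto
    have "A ((z + c *\<^sub>R h) - y) - A (z - y) = B ((z + c *\<^sub>R h) - y) - B (z - y)"
      using seg[OF w1] seg[OF w2] by simp
    then have "A (c *\<^sub>R h) = B (c *\<^sub>R h)"
      using lA lB by (simp add: linear_diff[symmetric] algebra_simps)
    then have "c *\<^sub>R A h = c *\<^sub>R B h" using lA lB by (simp add: linear_scale)
    then show "A h = B h" using c by simp
  qed
qed



definition ml :: "nat \<Rightarrow> ('b::real_vector list \<Rightarrow> 'c::real_vector) \<Rightarrow> bool" where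
  "ml k T \<longleftrightarrow> (\<forall>i<k. \<forall>vs. length vs = k \<longrightarrow> linear (\<lambda>v. T (vs[i:=v])))"

lemma ml_0: "ml 0 T" by (simp add: ml_def)

lemma ml_cons: fixes T :: "'b::real_vector list \<Rightarrow> 'c::real_vector"
  assumes "ml (Suc k) T" shows "ml k (\<lambda>vs. T (a # vs))"
  unfolding ml_def
proof (intro allI impI)
  fix i and vs :: "'b list" assume h: "i < k" "length vs = k"
  then have "Suc i < Suc k" "length (a # vs) = Suc k" by auto
  then have "linear (\<lambda>v. T ((a # vs)[Suc i := v]))" using assms unfolding ml_def by blast
  then show "linear (\<lambda>v. T (a # vs[i := v]))" by simp
qed

lemma ml_lin0: fixes T :: "'b::real_vector list \<Rightarrow> 'c::real_vector"
  assumes "ml (Suc k) T" "length vs = k" shows "linear (\<lambda>v. T (v # vs))"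
proof -
  have "length (0 # vs) = Suc k" using assms by simp
  then have "linear (\<lambda>v. T ((0 # vs)[0 := v]))" using assms(1) unfolding ml_def by blast
  then show ?thesis by simp
qed

lemma ml_diff: assumes "ml k T1" "ml k T2" shows "ml k (\<lambda>vs. T1 vs - T2 vs)"
  using assms unfolding ml_def by (auto intro: linear_compose_sub)

lemma ml_bounded:
  fixes T :: "'b::euclidean_space list \<Rightarrow> 'c::real_normed_vector"
  assumes "ml k T"
  shows "\<exists>C\<ge>0. \<forall>vs. length vs = k \<longrightarrow> (\<forall>v\<in>set vs. norm v \<le> 1) \<longrightarrow> norm (T vs) \<le> C"
  using assms
proof (induction k arbitrary: T)
  case 0
  show ?case by (rule exI[of _ "norm (T [])"]) auto
next
  case (Suc k)
  have "\<forall>b. \<exists>C\<ge>0. \<forall>vs. length vs = k \<longrightarrow> (\<forall>v\<in>set vs. norm v \<le> 1) \<longrightarrow> norm (T (b # vs)) \<le> C"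
    using Suc.IH[OF ml_cons[OF Suc.prems]] by blast
  then obtain Cf where Cf: "\<And>b. Cf b \<ge> 0" "\<And>b vs. length vs = k \<Longrightarrow> (\<forall>v\<in>set vs. norm v \<le> 1) \<Longrightarrow> norm (T (b # vs)) \<le> Cf b"
    by metis
  show ?case
  proof (intro exI[of _ "\<Sum>b\<in>Basis. Cf b"] conjI allI impI)
    show "0 \<le> (\<Sum>b\<in>Basis. Cf b)" using Cf by (simp add: sum_nonneg)
    fix vs :: "'b list" assume l: "length vs = Suc k" and n: "\<forall>v\<in>set vs. norm v \<le> 1"
    then obtain v vs' where vs: "vs = v # vs'" "length vs' = k" by (cases vs) auto
    have lin: "linear (\<lambda>v. T (v # vs'))" using ml_lin0[OF Suc.prems vs(2)] .
    have "T (v # vs') = T ((\<Sum>b\<in>Basis. (v \<bullet> b) *\<^sub>R b) # vs')" by (simp add: euclidean_representation)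
    also have "\<dots> = (\<Sum>b\<in>Basis. (v \<bullet> b) *\<^sub>R T (b # vs'))"
      using linear_sum[OF lin, of "\<lambda>b. (v \<bullet> b) *\<^sub>R b" Basis] linear_scale[OF lin] by (simp add: o_def)
    finally have eq: "T (v # vs') = (\<Sum>b\<in>Basis. (v \<bullet> b) *\<^sub>R T (b # vs'))" .
    have "norm (T vs) \<le> (\<Sum>b\<in>Basis. norm ((v \<bullet> b) *\<^sub>R T (b # vs')))"
      unfolding vs eq by (rule norm_sum)
    also have "\<dots> \<le> (\<Sum>b\<in>Basis. Cf b)"
    proof (rule sum_mono)
      fix b :: 'b assume b: "b \<in> Basis"
      have "\<bar>v \<bullet> b\<bar> \<le> norm v * norm b" by (rule Cauchy_Schwarz_ineq2)
      also have "\<dots> \<le> 1" using n vs b by simp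
      finally have vb: "\<bar>v \<bullet> b\<bar> \<le> 1" .
      have "norm (T (b # vs')) \<le> Cf b" using Cf(2)[OF vs(2)] n vs by auto
      then have "\<bar>v \<bullet> b\<bar> * norm (T (b # vs')) \<le> 1 * Cf b"
        using vb Cf(1) by (intro mult_mono) auto
      then show "norm ((v \<bullet> b) *\<^sub>R T (b # vs')) \<le> Cf b" by simp
    qed
    finally show "norm (T vs) \<le> (\<Sum>b\<in>Basis. Cf b)" .
  qed
qed

lemma ml_homog:
  assumes "ml k T" "length vs = k"
  shows "T (map (\<lambda>v. c *\<^sub>R v) vs) = c ^ k *\<^sub>R T vs"
  using assms
proof (induction k arbitrary: T vs)
  case 0
  then show ?case by simp
next
  case (Suc k)
  then obtain v vs' where vs: "vs = v # vs'" "length vs' = k" by (cases vs) auto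
  have "T (map (\<lambda>v. c *\<^sub>R v) vs) = T ((c *\<^sub>R v) # map (\<lambda>v. c *\<^sub>R v) vs')" using vs by simp
  also have "\<dots> = c *\<^sub>R T (v # map (\<lambda>v. c *\<^sub>R v) vs')"
    using linear_scale[OF ml_lin0[OF Suc.prems(1), of "map (\<lambda>v. c *\<^sub>R v) vs'"], of c v] vs by simp
  also have "T (v # map (\<lambda>v. c *\<^sub>R v) vs') = c ^ k *\<^sub>R T (v # vs')"
    using Suc.IH[OF ml_cons[OF Suc.prems(1)] vs(2)] .
  finally show ?case using vs by simp
qed

lemma tnorm_rep:
  fixes T :: "'b::euclidean_space list \<Rightarrow> 'c::real_normed_vector"
  assumes ml: "ml k T"
  shows "norm (T (replicate k s)) \<le> tnorm k T * norm s ^ k"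
proof -
  define S where "S = {vs::'b list. length vs = k \<and> (\<forall>v\<in>set vs. norm v \<le> 1)}"
  obtain C where C: "\<forall>vs. length vs = k \<longrightarrow> (\<forall>v\<in>set vs. norm v \<le> 1) \<longrightarrow> norm (T vs) \<le> C"
    using ml_bounded[OF ml] by blast
  have bdd: "bdd_above ((\<lambda>vs. norm (T vs)) ` S)" using C unfolding S_def by (auto intro!: bdd_aboveI2)
  have tn: "tnorm k T = (SUP vs\<in>S. norm (T vs))" unfolding tnorm_def S_def by simp
  have up: "norm (T vs) \<le> tnorm k T" if "vs \<in> S" for vs
    unfolding tn by (rule cSUP_upper[OF that bdd])
  show ?thesis
  proof (cases "s = 0")
    case True
    show ?thesis
    proof (cases k)
      case 0
      then have "[] \<in> S" unfolding S_def by simp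
      then show ?thesis using up 0 by simp
    next
      case (Suc k')
      have "T (replicate k s) = T (map (\<lambda>v. 0 *\<^sub>R v) (replicate k s))" using True by (simp add: map_replicate)
      also have "\<dots> = 0" using ml_homog[OF ml, of "replicate k s" 0] Suc by simp
      finally show ?thesis using True Suc by simp
    qed
  next
    case False
    define u where "u = s /\<^sub>R norm s"
    have "norm u = 1" using False by (simp add: u_def)
    then have "replicate k u \<in> S" unfolding S_def by auto
    then have b: "norm (T (replicate k u)) \<le> tnorm k T" using up by blast
    have "s = norm s *\<^sub>R u" using False by (simp add: u_def)
    then have "replicate k s = map (\<lambda>v. norm s *\<^sub>R v) (replicate k u)"
      by (simp add: map_replicate)
    then have "T (replicate k s) = norm s ^ k *\<^sub>R T (replicate k u)"
      using ml_homog[OF ml, of "replicate k u" "norm s"] by (simp only:) simp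
    then have "norm (T (replicate k s)) = norm s ^ k * norm (T (replicate k u))" by simp
    also have "\<dots> \<le> norm s ^ k * tnorm k T" using b by (intro mult_left_mono) auto
    finally show ?thesis by (simp add: mult.commute)
  qed
qed



lemma deriv_lin_param:
  fixes F :: "'p::real_vector \<Rightarrow> 'a::euclidean_space \<Rightarrow> real" and F' :: "'p \<Rightarrow> 'a \<Rightarrow> real"
  assumes cS: "convex S" and iS: "interior S \<noteq> {}" and y: "y \<in> S"
    and d: "\<And>w. ((\<lambda>z. F w z) has_derivative (\<lambda>b. F' w b)) (at y within S)"
    and l: "\<And>z. z \<in> S \<Longrightarrow> linear (\<lambda>w. F w z)"
  shows "linear (\<lambda>w. F' w b)"
proof (rule linearI)
  fix w1 w2
  have "((\<lambda>z. F w1 z + F w2 z) has_derivative (\<lambda>b. F' w1 b + F' w2 b)) (at y within S)"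
    using d by (intro has_derivative_add) auto
  then have "((\<lambda>z. F (w1 + w2) z) has_derivative (\<lambda>b. F' w1 b + F' w2 b)) (at y within S)"
  proof (rule has_derivative_transform_within[where d=1])
    fix x' assume "x' \<in> S" then show "F w1 x' + F w2 x' = F (w1 + w2) x'"
      using linear_add[OF l[OF \<open>x' \<in> S\<close>], of w1 w2] by simp
  qed (use y in auto)
  then have "(\<lambda>b. F' (w1 + w2) b) = (\<lambda>b. F' w1 b + F' w2 b)"
    using deriv_unique_convex[OF cS iS y d[of "w1 + w2"]] by blast
  then show "F' (w1 + w2) b = F' w1 b + F' w2 b" by metis
next
  fix r w
  have "((\<lambda>z. r * F w z) has_derivative (\<lambda>b. r * F' w b)) (at y within S)"
    using d by (intro has_derivative_mult_right) auto
  then have "((\<lambda>z. F (r *\<^sub>R w) z) has_derivative (\<lambda>b. r * F' w b)) (at y within S)"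
  proof (rule has_derivative_transform_within[where d=1])
    fix x' assume "x' \<in> S" then show "r * F w x' = F (r *\<^sub>R w) x'"
      using linear_scale[OF l[OF \<open>x' \<in> S\<close>], of r w] by simp
  qed (use y in auto)
  then have "(\<lambda>b. F' (r *\<^sub>R w) b) = (\<lambda>b. r * F' w b)"
    using deriv_unique_convex[OF cS iS y d[of "r *\<^sub>R w"]] by blast
  then show "F' (r *\<^sub>R w) b = r *\<^sub>R F' w b" by (metis real_scaleR_def)
qed

lemma inner_ext: fixes x y :: "'a::real_inner" assumes "\<And>b. x \<bullet> b = y \<bullet> b" shows "x = y"
proof -
  have "(x - y) \<bullet> (x - y) = 0" using assms[of "x - y"] by (simp add: inner_diff_left)
  then show ?thesis by simp
qed

lemma linear_from_inner:
  fixes G :: "'p::real_vector \<Rightarrow> 'a::real_inner"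
  assumes "\<And>b. linear (\<lambda>w. G w \<bullet> b)"
  shows "linear G"
proof (rule linearI)
  fix w1 w2 show "G (w1 + w2) = G w1 + G w2"
  proof (rule inner_ext)
    fix b show "G (w1 + w2) \<bullet> b = (G w1 + G w2) \<bullet> b"
      using linear_add[OF assms[of b], of w1 w2] by (simp add: inner_add_left)
  qed
next
  fix r w show "G (r *\<^sub>R w) = r *\<^sub>R G w"
  proof (rule inner_ext)
    fix b show "G (r *\<^sub>R w) \<bullet> b = (r *\<^sub>R G w) \<bullet> b"
      using linear_scale[OF assms[of b], of r w] by simp
  qed
qed

lemma ml_D:
  fixes D :: "nat \<Rightarrow> 'a \<Rightarrow> 'b::euclidean_space \<Rightarrow> 'b list \<Rightarrow> real"
  assumes cY: "convex Y" and iY: "interior Y \<noteq> {}" and yd: "y_derivs X Y f k D" and x: "x \<in> X"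
  shows "j \<le> k \<Longrightarrow> \<forall>y\<in>Y. ml j (D j x y)"
proof (induction j)
  case 0
  then show ?case by (simp add: ml_0)
next
  case (Suc j)
  have jk: "j < k" using Suc.prems by simp
  have IH: "\<forall>y\<in>Y. ml j (D j x y)" using Suc.IH jk by simp
  have der: "\<And>y vs. y \<in> Y \<Longrightarrow> length vs = j \<Longrightarrow>
      ((\<lambda>z. D j x z vs) has_derivative (\<lambda>v. D (Suc j) x y (v # vs))) (at y within Y)"
    using yd x jk unfolding y_derivs_def by blast
  show ?case unfolding ml_def
  proof (intro ballI allI impI)
    fix y i and vs :: "'b list" assume y: "y \<in> Y" and i: "i < Suc j" and l: "length vs = Suc j"
    then obtain a vs' where vs: "vs = a # vs'" "length vs' = j" by (cases vs) auto
    show "linear (\<lambda>v. D (Suc j) x y (vs[i := v]))"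
    proof (cases i)
      case 0
      have "linear (\<lambda>v. D (Suc j) x y (v # vs'))"
        using der[OF y vs(2)] has_derivative_bounded_linear bounded_linear.linear by blast
      then show ?thesis using vs 0 by simp
    next
      case (Suc i')
      have i': "i' < j" using i Suc by simp
      have "linear (\<lambda>w. D (Suc j) x y (a # vs'[i' := w]))"
      proof (rule deriv_lin_param[OF cY iY y, where F="\<lambda>w z. D j x z (vs'[i' := w])"])
        fix w show "((\<lambda>z. D j x z (vs'[i' := w])) has_derivative (\<lambda>b. D (Suc j) x y (b # vs'[i' := w]))) (at y within Y)"
          using der[OF y] vs(2) by simp
      next
        fix z assume z: "z \<in> Y"
        have "ml j (D j x z)" using IH z by blast
        then show "linear (\<lambda>w. D j x z (vs'[i' := w]))" using i' vs(2) unfolding ml_def by blast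
      qed
      then show ?thesis using vs Suc by simp
    qed
  qed
qed

lemma ml_Dx:
  fixes D :: "nat \<Rightarrow> 'a::euclidean_space \<Rightarrow> 'b::euclidean_space \<Rightarrow> 'b list \<Rightarrow> real"
  assumes cX: "convex X" and iX: "interior X \<noteq> {}" and cY: "convex Y" and iY: "interior Y \<noteq> {}"
    and yd: "y_derivs X Y f k D" and xd: "xy_deriv X Y k (D k) Dx" and x: "x \<in> X" and y: "y \<in> Y"
  shows "ml k (Dx x y)"
  unfolding ml_def
proof (intro allI impI)
  fix i and vs :: "'b list" assume i: "i < k" and l: "length vs = k"
  show "linear (\<lambda>v. Dx x y (vs[i := v]))"
  proof (rule linear_from_inner)
    fix b
    show "linear (\<lambda>w. Dx x y (vs[i := w]) \<bullet> b)"
    proof (rule deriv_lin_param[OF cX iX x, where F="\<lambda>w x'. D k x' y (vs[i := w])"])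
      fix w show "((\<lambda>x'. D k x' y (vs[i := w])) has_derivative (\<lambda>b. Dx x y (vs[i := w]) \<bullet> b)) (at x within X)"
        using xd x y l unfolding xy_deriv_def by simp
    next
      fix z assume z: "z \<in> X"
      have "ml k (D k z y)" using ml_D[OF cY iY yd z, of k] y by simp
      then show "linear (\<lambda>w. D k z y (vs[i := w]))" using i l unfolding ml_def by blast
    qed
  qed
qed



lemma ytaylor:
  fixes E :: "nat \<Rightarrow> 'b::euclidean_space \<Rightarrow> 'b list \<Rightarrow> real"
  assumes cY: "convex Y" and yh: "yh \<in> Y" and y: "y \<in> Y"
    and der: "\<forall>j<k. \<forall>z\<in>Y. \<forall>vs. length vs = j \<longrightarrow> ((\<lambda>z'. E j z' vs) has_derivative (\<lambda>v. E (Suc j) z (v # vs))) (at z within Y)"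
    and bnd: "\<forall>t\<in>{0..1}. \<bar>E k (yh + t *\<^sub>R (y - yh)) (replicate k (y - yh)) - E k yh (replicate k (y - yh))\<bar> \<le> B + C * t"
  shows "\<bar>E 0 y [] - (\<Sum>j\<le>k. E j yh (replicate j (y - yh)) / fact j)\<bar> \<le> B / fact k + C / fact (Suc k)"
proof -
  define s where "s = y - yh"
  define \<gamma> where "\<gamma> t = yh + t *\<^sub>R s" for t :: real
  define g where "g j t = E j (\<gamma> t) (replicate j s)" for j t
  have im: "\<gamma> ` {0..1} \<subseteq> Y"
  proof
    fix p assume "p \<in> \<gamma> ` {0..1}"
    then obtain t where t: "t \<in> {0..1}" "p = \<gamma> t" by auto
    have "p = (1 - t) *\<^sub>R yh + t *\<^sub>R y" using t by (simp add: \<gamma>_def s_def algebra_simps)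
    then show "p \<in> Y" using cY y yh t by (simp add: convex_def)
  qed
  have d: "\<forall>j<k. \<forall>t\<in>{0..1}. (g j has_real_derivative g (Suc j) t) (at t within {0..1})"
  proof (intro allI impI ballI)
    fix j and t :: real assume j: "j < k" and t: "t \<in> {0..1}"
    have z: "\<gamma> t \<in> Y" using im t by auto
    have dz: "((\<lambda>z'. E j z' (replicate j s)) has_derivative (\<lambda>v. E (Suc j) (\<gamma> t) (v # replicate j s))) (at (\<gamma> t) within Y)"
      using der j z by auto
    have lin: "linear (\<lambda>v. E (Suc j) (\<gamma> t) (v # replicate j s))"
      using dz has_derivative_bounded_linear bounded_linear.linear by blast
    have dg: "(\<gamma> has_derivative (\<lambda>\<tau>. \<tau> *\<^sub>R s)) (at t within {0..1})"
      unfolding \<gamma>_def by (auto intro!: derivative_eq_intros)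
    have "((\<lambda>\<tau>. E j (\<gamma> \<tau>) (replicate j s)) has_derivative (\<lambda>\<tau>. E (Suc j) (\<gamma> t) ((\<tau> *\<^sub>R s) # replicate j s))) (at t within {0..1})"
      by (rule has_derivative_in_compose[OF dg]) (rule has_derivative_subset[OF dz im])
    moreover have "(\<lambda>\<tau>. E (Suc j) (\<gamma> t) ((\<tau> *\<^sub>R s) # replicate j s)) = (\<lambda>\<tau>. g (Suc j) t * \<tau>)"
    proof
      fix \<tau> :: real
      show "E (Suc j) (\<gamma> t) ((\<tau> *\<^sub>R s) # replicate j s) = g (Suc j) t * \<tau>"
        using linear_scale[OF lin, of \<tau> s] by (simp add: g_def)
    qed
    ultimately show "(g j has_real_derivative g (Suc j) t) (at t within {0..1})"
      unfolding has_field_derivative_def g_def[abs_def] by simp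
  qed
  have b: "\<forall>t\<in>{0..1}. \<bar>g k t - g k 0\<bar> \<le> B + C * t"
    using bnd unfolding g_def \<gamma>_def s_def by simp
  have "\<bar>g 0 1 - (\<Sum>j\<le>k. g j 0 * 1^j / fact j)\<bar> \<le> B * 1^k / fact k + C * 1^(Suc k) / fact (Suc k)"
    using bspec[OF taylor_1d[OF d b], of 1] by simp
  moreover have "g 0 1 = E 0 y []" by (simp add: g_def \<gamma>_def s_def)
  moreover have "\<And>j. g j 0 = E j yh (replicate j (y - yh))" by (simp add: g_def \<gamma>_def s_def)
  ultimately show ?thesis by simp
qed

lemma descent:
  fixes h :: "'a::real_inner \<Rightarrow> real"
  assumes cX: "convex X" and dh: "\<forall>x\<in>X. (h has_derivative (\<lambda>u. G x \<bullet> u)) (at x within X)"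
    and lip: "\<forall>x\<in>X. \<forall>x'\<in>X. norm (G x' - G x) \<le> L * norm (x' - x)"
    and u: "u \<in> X" and w: "w \<in> X"
  shows "\<bar>h u - h w - G w \<bullet> (u - w)\<bar> \<le> L / 2 * (norm (u - w))\<^sup>2"
proof -
  define \<gamma> where "\<gamma> t = w + t *\<^sub>R (u - w)" for t :: real
  define g where "g j t = (if j = 0 then h (\<gamma> t) else G (\<gamma> t) \<bullet> (u - w))" for j :: nat and t
  have im: "\<gamma> ` {0..1} \<subseteq> X"
  proof
    fix p assume "p \<in> \<gamma> ` {0..1}"
    then obtain t where t: "t \<in> {0..1}" "p = \<gamma> t" by auto
    have "p = (1 - t) *\<^sub>R w + t *\<^sub>R u" using t by (simp add: \<gamma>_def algebra_simps)
    then show "p \<in> X" using cX u w t by (simp add: convex_def)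
  qed
  have d: "\<forall>j<1. \<forall>t\<in>{0..1}. (g j has_real_derivative g (Suc j) t) (at t within {0..1})"
  proof (intro allI impI ballI)
    fix j and t :: real assume j: "j < (1::nat)" and t: "t \<in> {0..1}"
    have z: "\<gamma> t \<in> X" using im t by auto
    have dg: "(\<gamma> has_derivative (\<lambda>\<tau>. \<tau> *\<^sub>R (u - w))) (at t within {0..1})"
      unfolding \<gamma>_def by (auto intro!: derivative_eq_intros)
    have "((\<lambda>\<tau>. h (\<gamma> \<tau>)) has_derivative (\<lambda>\<tau>. G (\<gamma> t) \<bullet> (\<tau> *\<^sub>R (u - w)))) (at t within {0..1})"
      by (rule has_derivative_in_compose[OF dg]) (rule has_derivative_subset[OF _ im], use dh z in auto)
    moreover have "(\<lambda>\<tau>. G (\<gamma> t) \<bullet> (\<tau> *\<^sub>R (u - w))) = (\<lambda>\<tau>. g (Suc j) t * \<tau>)"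
      by (rule ext) (simp add: g_def)
    ultimately show "(g j has_real_derivative g (Suc j) t) (at t within {0..1})"
      using j unfolding has_field_derivative_def g_def[abs_def] by simp
  qed
  have b: "\<forall>t\<in>{0..1}. \<bar>g 1 t - g 1 0\<bar> \<le> 0 + (L * (norm (u - w))\<^sup>2) * t"
  proof
    fix t :: real assume t: "t \<in> {0..1}"
    have z: "\<gamma> t \<in> X" using im t by auto
    have "\<bar>g 1 t - g 1 0\<bar> = \<bar>(G (\<gamma> t) - G w) \<bullet> (u - w)\<bar>" by (simp add: g_def \<gamma>_def inner_diff_left)
    also have "\<dots> \<le> norm (G (\<gamma> t) - G w) * norm (u - w)" by (rule Cauchy_Schwarz_ineq2)
    also have "\<dots> \<le> (L * norm (\<gamma> t - w)) * norm (u - w)"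
      using lip z w by (intro mult_right_mono) auto
    also have "norm (\<gamma> t - w) = t * norm (u - w)" using t by (simp add: \<gamma>_def)
    finally show "\<bar>g 1 t - g 1 0\<bar> \<le> 0 + (L * (norm (u - w))\<^sup>2) * t" by (simp add: power2_eq_square algebra_simps)
  qed
  have "\<forall>t\<in>{0..1}. \<bar>g 0 t - (\<Sum>j\<le>1. g j 0 * t^j / fact j)\<bar> \<le> 0 * t^1 / fact 1 + (L * (norm (u - w))\<^sup>2) * t^(Suc 1) / fact (Suc 1)"
    by (rule taylor_1d[OF d b])
  from bspec[OF this, of 1] have "\<bar>g 0 1 - (\<Sum>j\<le>1. g j 0 / fact j)\<bar> \<le> (L * (norm (u - w))\<^sup>2) / 2" by simp
  then show ?thesis by (simp add: g_def \<gamma>_def diff_diff_eq)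
qed

lemma smooth_wc:
  fixes h :: "'a::real_inner \<Rightarrow> real"
  assumes cX: "convex X" and dh: "\<forall>x\<in>X. (h has_derivative (\<lambda>u. G x \<bullet> u)) (at x within X)"
    and lip: "\<forall>x\<in>X. \<forall>x'\<in>X. norm (G x' - G x) \<le> L * norm (x' - x)"
    and u: "u \<in> X" and v: "v \<in> X" and t: "t \<in> {0..1}"
  shows "\<bar>t * h u + (1 - t) * h v - h (t *\<^sub>R u + (1 - t) *\<^sub>R v)\<bar> \<le> L / 2 * t * (1 - t) * (norm (u - v))\<^sup>2"
proof -
  define w where "w = t *\<^sub>R u + (1 - t) *\<^sub>R v"
  have w: "w \<in> X" using cX u v t unfolding w_def convex_def by auto
  have e1: "u - w = (1 - t) *\<^sub>R (u - v)" by (simp add: w_def algebra_simps)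
  have e2: "v - w = (- t) *\<^sub>R (u - v)" by (simp add: w_def algebra_simps)
  define c where "c = G w \<bullet> (u - v)"
  define n where "n = norm (u - v)"
  have t0: "0 \<le> t" "t \<le> 1" using t by auto
  have A: "\<bar>h u - h w - (1 - t) * c\<bar> \<le> L / 2 * ((1 - t) * n)\<^sup>2"
    using descent[OF cX dh lip u w] t0 unfolding e1 c_def n_def by simp
  have B: "\<bar>h v - h w + t * c\<bar> \<le> L / 2 * (t * n)\<^sup>2"
    using descent[OF cX dh lip v w] t0 unfolding e2 c_def n_def by simp
  have eq: "t * h u + (1 - t) * h v - h w = t * (h u - h w - (1 - t) * c) + (1 - t) * (h v - h w + t * c)"
    by (simp add: algebra_simps)
  have "\<bar>t * h u + (1 - t) * h v - h w\<bar> \<le> t * \<bar>h u - h w - (1 - t) * c\<bar> + (1 - t) * \<bar>h v - h w + t * c\<bar>"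
  proof -
    have "\<bar>t * (h u - h w - (1 - t) * c) + (1 - t) * (h v - h w + t * c)\<bar>
        \<le> \<bar>t * (h u - h w - (1 - t) * c)\<bar> + \<bar>(1 - t) * (h v - h w + t * c)\<bar>" by (rule abs_triangle_ineq)
    also have "\<dots> = t * \<bar>h u - h w - (1 - t) * c\<bar> + (1 - t) * \<bar>h v - h w + t * c\<bar>"
      using t0 by (simp add: abs_mult)
    finally show ?thesis unfolding eq .
  qed
  also have "\<dots> \<le> t * (L / 2 * ((1 - t) * n)\<^sup>2) + (1 - t) * (L / 2 * (t * n)\<^sup>2)"
    using A B t0 by (intro add_mono mult_left_mono) auto
  also have "\<dots> = L / 2 * t * (1 - t) * n\<^sup>2" by (simp add: power2_eq_square field_simps)
  finally show ?thesis unfolding w_def n_def .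
qed



definition wc :: "'a::real_normed_vector set \<Rightarrow> ('a \<Rightarrow> real) \<Rightarrow> real \<Rightarrow> bool" where
  "wc X \<phi> c \<longleftrightarrow> (\<forall>u\<in>X. \<forall>v\<in>X. \<forall>t\<in>{0..1}.
     \<phi> (t *\<^sub>R u + (1 - t) *\<^sub>R v) \<le> t * \<phi> u + (1 - t) * \<phi> v + c / 2 * t * (1 - t) * (norm (u - v))\<^sup>2)"

lemma quad_id:
  fixes a b :: "'a::real_inner"
  shows "(norm (t *\<^sub>R a + (1 - t) *\<^sub>R b))\<^sup>2 = t * (norm a)\<^sup>2 + (1 - t) * (norm b)\<^sup>2 - t * (1 - t) * (norm (a - b))\<^sup>2"
  by (simp add: power2_norm_eq_inner inner_add_left inner_add_right inner_diff_left inner_diff_right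
      inner_commute algebra_simps)

lemma deriv_quad:
  fixes f :: "'a::real_inner \<Rightarrow> real"
  assumes q: "\<forall>z. \<bar>f z - f x - G \<bullet> (z - x)\<bar> \<le> K * (norm (z - x))\<^sup>2" and K: "K \<ge> 0"
  shows "(f has_derivative (\<lambda>h. G \<bullet> h)) (at x)"
  unfolding has_derivative_at_alt
proof (intro conjI allI impI)
  show "bounded_linear ((\<bullet>) G)" by (rule bounded_linear_inner_right)
  fix e :: real assume e: "e > 0"
  show "\<exists>d>0. \<forall>y. norm (y - x) < d \<longrightarrow> norm (f y - f x - G \<bullet> (y - x)) \<le> e * norm (y - x)"
  proof (intro exI[of _ "e / (K + 1)"] conjI allI impI)
    show "0 < e / (K + 1)" using e K by simp
    fix y assume y: "norm (y - x) < e / (K + 1)"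
    have "norm (f y - f x - G \<bullet> (y - x)) \<le> K * (norm (y - x))\<^sup>2" using q by simp
    also have "\<dots> = (K * norm (y - x)) * norm (y - x)" by (simp add: power2_eq_square)
    also have "\<dots> \<le> e * norm (y - x)"
    proof (rule mult_right_mono)
      have "K * norm (y - x) \<le> (K + 1) * norm (y - x)" by (simp add: algebra_simps)
      also have "\<dots> \<le> (K + 1) * (e / (K + 1))" using y K by (intro mult_left_mono) auto
      also have "\<dots> = e" using K by simp
      finally show "K * norm (y - x) \<le> e" .
    qed simp
    finally show "norm (f y - f x - G \<bullet> (y - x)) \<le> e * norm (y - x)" .
  qed
qed



lemma arith_sc:
  fixes Pw Pu Pv Qw Qu Qv N t c l :: real
  assumes "Pw \<le> t*Pu + (1-t)*Pv + c/2*t*(1-t)*N" "Qw = t*Qu + (1-t)*Qv - t*(1-t)*N"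
  shows "Pw + l/2*Qw \<le> t*(Pu + l/2*Qu) + (1-t)*(Pv + l/2*Qv) - (l-c)/2*t*(1-t)*N"
proof -
  have "t*(Pu + l/2*Qu) + (1-t)*(Pv + l/2*Qv) - (l-c)/2*t*(1-t)*N - (Pw + l/2*Qw)
      = (t*Pu + (1-t)*Pv + c/2*t*(1-t)*N) - Pw"
    unfolding assms(2) by (simp add: field_simps)
  then show ?thesis using assms(1) by linarith
qed

lemma moreau_main:
  fixes X :: "'a::euclidean_space set" and \<phi> :: "'a \<Rightarrow> real"
  assumes cX: "convex X" and ne: "X \<noteq> {}" and wcx: "wc X \<phi> c" and lc: "c < l"
    and bdd: "bdd_below ((\<lambda>u. \<phi> u + l / 2 * (norm (u - x))\<^sup>2) ` X)"
  shows "\<exists>p us. (\<forall>n. us n \<in> X) \<and> us \<longlonglongrightarrow> p \<and>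
     ((\<lambda>n. \<phi> (us n) + l / 2 * (norm (us n - x))\<^sup>2) \<longlonglongrightarrow> moreau X \<phi> l x) \<and>
     (\<forall>u\<in>X. moreau X \<phi> l x + (l - c) / 2 * (norm (u - p))\<^sup>2 \<le> \<phi> u + l / 2 * (norm (u - x))\<^sup>2) \<and>
     (moreau X \<phi> l has_derivative (\<lambda>h. (l *\<^sub>R (x - p)) \<bullet> h)) (at x)"
proof -
  define F where "F u = \<phi> u + l / 2 * (norm (u - x))\<^sup>2" for u
  define e where "e = moreau X \<phi> l x"
  define m where "m = l - c"
  have m: "m > 0" using lc by (simp add: m_def)
  have e_def': "e = (INF u\<in>X. F u)" unfolding e_def moreau_def F_def by simp
  have bddF: "bdd_below (F ` X)" using bdd unfolding F_def by simp
  have e_le: "e \<le> F u" if "u \<in> X" for u unfolding e_def' by (rule cINF_lower[OF bddF that])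
  have SC: "F (t *\<^sub>R u + (1 - t) *\<^sub>R v) \<le> t * F u + (1 - t) * F v - m / 2 * t * (1 - t) * (norm (u - v))\<^sup>2"
    if u: "u \<in> X" and v: "v \<in> X" and t: "t \<in> {0..1}" for u v t
  proof -
    have w: "\<phi> (t *\<^sub>R u + (1 - t) *\<^sub>R v) \<le> t * \<phi> u + (1 - t) * \<phi> v + c / 2 * t * (1 - t) * (norm (u - v))\<^sup>2"
      using wcx u v t unfolding wc_def by blast
    have "t *\<^sub>R u + (1 - t) *\<^sub>R v - x = t *\<^sub>R (u - x) + (1 - t) *\<^sub>R (v - x)" by (simp add: algebra_simps)
    then have q: "(norm (t *\<^sub>R u + (1 - t) *\<^sub>R v - x))\<^sup>2 = t * (norm (u - x))\<^sup>2 + (1 - t) * (norm (v - x))\<^sup>2 - t * (1 - t) * (norm (u - v))\<^sup>2"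
      using quad_id[of t "u - x" "v - x"] by simp
    show ?thesis unfolding F_def m_def by (rule arith_sc[OF w q])
  qed
  have grow_near: "t * (m / 2 * (1 - t) * (norm (u - v))\<^sup>2) - (1 - t) * (F v - e) \<le> t * (F u - e)"
    if u: "u \<in> X" and v: "v \<in> X" and t: "t \<in> {0..1}" for u v t
  proof -
    have wX: "t *\<^sub>R u + (1 - t) *\<^sub>R v \<in> X" using cX u v t unfolding convex_def by auto
    have "e \<le> t * F u + (1 - t) * F v - m / 2 * t * (1 - t) * (norm (u - v))\<^sup>2"
      using e_le[OF wX] SC[OF u v t] by linarith
    then show ?thesis by (simp add: algebra_simps)
  qed
  have near: "\<exists>u\<in>X. F u < e + 1 / real (Suc n)" for n
  proof -
    have "(INF u\<in>X. F u) < e + 1 / real (Suc n)" unfolding e_def'[symmetric] by simp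
    then show ?thesis using cINF_less_iff[OF ne bddF] by blast
  qed
  then have "\<forall>n. \<exists>u. u \<in> X \<and> F u < e + 1 / real (Suc n)" by blast
  then obtain us where us0: "\<forall>n. us n \<in> X \<and> F (us n) < e + 1 / real (Suc n)" by (rule choice[THEN exE])
  then have us: "\<And>n. us n \<in> X" "\<And>n. F (us n) < e + 1 / real (Suc n)" by auto
  have Fus: "(\<lambda>n. F (us n)) \<longlonglongrightarrow> e"
  proof (rule tendsto_sandwich[of "\<lambda>n. e" _ _ "\<lambda>n. e + 1 / real (Suc n)"])
    show "\<forall>\<^sub>F n in sequentially. e \<le> F (us n)"
      by (rule always_eventually) (use e_le us(1) in blast)
    show "\<forall>\<^sub>F n in sequentially. F (us n) \<le> e + 1 / real (Suc n)"
      by (rule always_eventually) (use us(2) less_imp_le in blast)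
    show "(\<lambda>n. e) \<longlonglongrightarrow> e" by simp
    have "(\<lambda>n. 1 / real (Suc n)) \<longlonglongrightarrow> 0" using LIMSEQ_inverse_real_of_nat by (simp add: inverse_eq_divide)
    then show "(\<lambda>n. e + 1 / real (Suc n)) \<longlonglongrightarrow> e" using tendsto_add[of "\<lambda>n. e" e] by fastforce
  qed
  have cauchy: "Cauchy us"
  proof (rule metric_CauchyI)
    fix \<epsilon> :: real assume \<epsilon>: "\<epsilon> > 0"
    obtain N0 :: nat where N0: "8 / (m * \<epsilon>\<^sup>2) < real N0" using reals_Archimedean2 by blast
    define N where "N = N0"
    have N: "8 / (m * \<epsilon>\<^sup>2) < real (Suc N)" using N0 unfolding N_def by simp
    show "\<exists>M. \<forall>a\<ge>M. \<forall>b\<ge>M. dist (us a) (us b) < \<epsilon>"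
    proof (intro exI[of _ N] allI impI)
      fix a b assume a: "a \<ge> N" and b: "b \<ge> N"
      have g: "(1/2) * (m / 2 * (1 - 1/2) * (norm (us a - us b))\<^sup>2) - (1 - 1/2) * (F (us b) - e) \<le> (1/2) * (F (us a) - e)"
        using grow_near[OF us(1) us(1), of "1/2" a b] by simp
      have ia: "1 / real (Suc a) \<le> 1 / real (Suc N)" using a by (simp add: frac_le)
      have ib: "1 / real (Suc b) \<le> 1 / real (Suc N)" using b by (simp add: frac_le)
      define nn where "nn = (norm (us a - us b))\<^sup>2"
      have q1: "(1/2) * (m / 2 * (1 - 1/2) * nn) = m * nn / 8" by simp
      have q2: "(1 - 1/2) * (F (us b) - e) = (F (us b) - e) / 2" "(1/2) * (F (us a) - e) = (F (us a) - e) / 2" by simp_all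
      have g': "m * nn / 8 \<le> (F (us a) - e) / 2 + (F (us b) - e) / 2" using g q1 q2 unfolding nn_def by linarith
      have h0: "m * nn / 8 < 1 / real (Suc N)" using g' us(2)[of a] us(2)[of b] ia ib by argo
      then have h1: "m * nn < 8 * (1 / real (Suc N))" by linarith
      have "8 < real (Suc N) * (m * \<epsilon>\<^sup>2)" using N m \<epsilon> by (simp add: divide_less_eq)
      then have h2: "8 * (1 / real (Suc N)) < m * \<epsilon>\<^sup>2" by (simp add: divide_less_eq mult.commute)
      have "m * nn < m * \<epsilon>\<^sup>2" using h1 h2 by linarith
      then have "(norm (us a - us b))\<^sup>2 < \<epsilon>\<^sup>2" using m unfolding nn_def by simp
      then show "dist (us a) (us b) < \<epsilon>" using \<epsilon> by (simp add: dist_norm power_less_imp_less_base)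
    qed
  qed
  then obtain p where p: "us \<longlonglongrightarrow> p" using Cauchy_convergent_iff convergent_def by blast
  have grow: "e + m / 2 * (norm (u - p))\<^sup>2 \<le> F u" if u: "u \<in> X" for u
  proof -
    define K where "K = m / 2 * (norm (u - p))\<^sup>2"
    define A where "A = F u - e"
    have K0: "K \<ge> 0" using m by (simp add: K_def)
    have tK: "(1 - t) * K \<le> A" if t: "0 < t" "t < 1" for t
    proof -
      have lim: "(\<lambda>n. t * (m / 2 * (1 - t) * (norm (u - us n))\<^sup>2) - (1 - t) * (F (us n) - e))
          \<longlonglongrightarrow> t * (m / 2 * (1 - t) * (norm (u - p))\<^sup>2) - (1 - t) * (e - e)"
        by (intro tendsto_intros p Fus)
      have "t * (m / 2 * (1 - t) * (norm (u - p))\<^sup>2) - (1 - t) * (e - e) \<le> t * A"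
        using LIMSEQ_le_const2[OF lim] grow_near[OF u us(1)] t unfolding A_def by auto
      then have "t * ((1 - t) * K) \<le> t * A" unfolding K_def by (simp add: algebra_simps)
      then show ?thesis using t by simp
    qed
    have "K \<le> A"
    proof (rule ccontr)
      assume "\<not> K \<le> A"
      then have KA: "A < K" by simp
      have A0: "0 \<le> A" using tK[of "1/2"] K0 by simp
      then have Kp: "K > 0" using KA by simp
      define t where "t = (K - A) / (2 * K)"
      have t0: "0 < t" using KA Kp by (simp add: t_def)
      have t1: "t < 1" using KA Kp A0 by (simp add: t_def field_simps)
      have "(1 - t) * K = (K + A) / 2" using Kp by (simp add: t_def field_simps)
      then show False using tK[OF t0 t1] KA by simp
    qed
    then show ?thesis unfolding K_def A_def by simp
  qed
  define G where "G = l *\<^sub>R (x - p)"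
  define K2 where "K2 = l\<^sup>2 / (2 * m) + \<bar>l\<bar> / 2"
  have Fz: "\<phi> u + l / 2 * (norm (u - z))\<^sup>2 = F u + l * ((x - u) \<bullet> (z - x)) + l / 2 * (norm (z - x))\<^sup>2" for u z
  proof -
    have "(norm (u - z))\<^sup>2 = (norm (u - x))\<^sup>2 + 2 * ((x - u) \<bullet> (z - x)) + (norm (z - x))\<^sup>2"
    proof -
      have "u - z = (u - x) - (z - x)" by simp
      then show ?thesis by (simp add: power2_norm_eq_inner inner_diff_left inner_diff_right inner_commute algebra_simps)
    qed
    then show ?thesis unfolding F_def by (simp add: field_simps)
  qed
  have lower: "e + G \<bullet> (z - x) - K2 * (norm (z - x))\<^sup>2 \<le> \<phi> u + l / 2 * (norm (u - z))\<^sup>2" if u: "u \<in> X" for u z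
  proof -
    define r where "r = norm (u - p)"
    define d where "d = norm (z - x)"
    have "(p - u) \<bullet> (z - x) \<ge> - (r * d)"
      using Cauchy_Schwarz_ineq2[of "p - u" "z - x"] unfolding r_def d_def by (simp add: norm_minus_commute)
    then have i1: "l * ((x - u) \<bullet> (z - x)) \<ge> G \<bullet> (z - x) - \<bar>l\<bar> * (r * d)"
    proof -
      have "l * ((x - u) \<bullet> (z - x)) = G \<bullet> (z - x) + l * ((p - u) \<bullet> (z - x))"
        by (simp add: G_def inner_diff_left algebra_simps)
      moreover have "l * ((p - u) \<bullet> (z - x)) \<ge> - (\<bar>l\<bar> * (r * d))"
      proof -
        have "\<bar>(p - u) \<bullet> (z - x)\<bar> \<le> r * d"
          using Cauchy_Schwarz_ineq2[of "p - u" "z - x"] unfolding r_def d_def by (simp add: norm_minus_commute)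
        then have "\<bar>l * ((p - u) \<bullet> (z - x))\<bar> \<le> \<bar>l\<bar> * (r * d)" by (simp add: abs_mult mult_left_mono)
        then show ?thesis by linarith
      qed
      ultimately show ?thesis by linarith
    qed
    have i2: "m / 2 * r\<^sup>2 - \<bar>l\<bar> * (r * d) \<ge> - (l\<^sup>2 / (2 * m) * d\<^sup>2)"
    proof -
      have "0 \<le> (m * r - \<bar>l\<bar> * d)\<^sup>2" by simp
      then have "0 \<le> m\<^sup>2 * r\<^sup>2 - 2 * m * (\<bar>l\<bar> * (r * d)) + l\<^sup>2 * d\<^sup>2"
        by (simp add: power2_eq_square algebra_simps)
      then have "0 \<le> (m\<^sup>2 * r\<^sup>2 - 2 * m * (\<bar>l\<bar> * (r * d)) + l\<^sup>2 * d\<^sup>2) / (2 * m)" using m by simp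
      also have "\<dots> = m / 2 * r\<^sup>2 - \<bar>l\<bar> * (r * d) + l\<^sup>2 / (2 * m) * d\<^sup>2"
        using m by (simp add: power2_eq_square field_simps)
      finally show ?thesis by simp
    qed
    have i3: "e + m / 2 * r\<^sup>2 \<le> F u" using grow[OF u] unfolding r_def .
    have i4: "l / 2 * d\<^sup>2 \<ge> - (\<bar>l\<bar> / 2 * d\<^sup>2)" by (simp add: abs_if)
    have i5: "K2 * d\<^sup>2 = l\<^sup>2 / (2 * m) * d\<^sup>2 + \<bar>l\<bar> / 2 * d\<^sup>2" unfolding K2_def by (simp add: distrib_right)
    show ?thesis unfolding Fz d_def[symmetric] using i1 i2 i3 i4 i5 by linarith
  qed
  have K2: "K2 \<ge> 0" unfolding K2_def using m by simp
  have quad: "\<bar>moreau X \<phi> l z - moreau X \<phi> l x - G \<bullet> (z - x)\<bar> \<le> K2 * (norm (z - x))\<^sup>2" for z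
  proof -
    define Fz where "Fz u = \<phi> u + l / 2 * (norm (u - z))\<^sup>2" for u
    have mz: "moreau X \<phi> l z = (INF u\<in>X. Fz u)" unfolding moreau_def Fz_def by simp
    have bz: "bdd_below (Fz ` X)" using lower unfolding Fz_def by (auto intro!: bdd_belowI2)
    have lo: "e + G \<bullet> (z - x) - K2 * (norm (z - x))\<^sup>2 \<le> moreau X \<phi> l z"
      unfolding mz using ne lower unfolding Fz_def by (intro cINF_greatest) auto
    have lim: "(\<lambda>n. Fz (us n)) \<longlonglongrightarrow> e + l * ((x - p) \<bullet> (z - x)) + l / 2 * (norm (z - x))\<^sup>2"
      unfolding Fz_def Fz by (intro tendsto_intros Fus p)
    have "moreau X \<phi> l z \<le> e + l * ((x - p) \<bullet> (z - x)) + l / 2 * (norm (z - x))\<^sup>2"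
      using LIMSEQ_le_const[OF lim] cINF_lower[OF bz us(1)] unfolding mz by auto
    also have "\<dots> \<le> e + G \<bullet> (z - x) + K2 * (norm (z - x))\<^sup>2"
    proof -
      have "G \<bullet> (z - x) = l * ((x - p) \<bullet> (z - x))" unfolding G_def by simp
      moreover have "l / 2 \<le> K2"
      proof -
        have "0 \<le> l\<^sup>2 / (2 * m)" using m by simp
        moreover have "l / 2 \<le> \<bar>l\<bar> / 2" by simp
        ultimately show ?thesis unfolding K2_def by linarith
      qed
      then have "l / 2 * (norm (z - x))\<^sup>2 \<le> K2 * (norm (z - x))\<^sup>2" by (intro mult_right_mono) auto
      ultimately show ?thesis by linarith
    qed
    finally have up: "moreau X \<phi> l z \<le> e + G \<bullet> (z - x) + K2 * (norm (z - x))\<^sup>2" .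
    show ?thesis using lo up unfolding e_def by simp
  qed
  have der: "(moreau X \<phi> l has_derivative (\<lambda>h. G \<bullet> h)) (at x)"
    by (rule deriv_quad[OF _ K2]) (use quad in auto)
  have r1: "(\<lambda>n. \<phi> (us n) + l / 2 * (norm (us n - x))\<^sup>2) \<longlonglongrightarrow> moreau X \<phi> l x"
    using Fus unfolding F_def e_def .
  have r2: "\<forall>u\<in>X. moreau X \<phi> l x + (l - c) / 2 * (norm (u - p))\<^sup>2 \<le> \<phi> u + l / 2 * (norm (u - x))\<^sup>2"
    using grow unfolding F_def e_def m_def by blast
  have r3: "(moreau X \<phi> l has_derivative (\<lambda>h. (l *\<^sub>R (x - p)) \<bullet> h)) (at x)"
    using der unfolding G_def .
  show ?thesis
    by (rule exI[of _ p], rule exI[of _ us]) (use us(1) p r1 r2 r3 in blast)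
qed



lemma compare:
  fixes \<phi>1 \<phi>2 :: "'a::real_inner \<Rightarrow> real"
  assumes us: "\<forall>n. us n \<in> X" "us \<longlonglongrightarrow> p" "(\<lambda>n. \<phi>1 (us n) + l / 2 * (norm (us n - x))\<^sup>2) \<longlonglongrightarrow> e1"
    and vs: "\<forall>n. vs n \<in> X" "vs \<longlonglongrightarrow> q" "(\<lambda>n. \<phi>2 (vs n) + l / 2 * (norm (vs n - x))\<^sup>2) \<longlonglongrightarrow> e2"
    and g1: "\<forall>u\<in>X. e1 + m1 / 2 * (norm (u - p))\<^sup>2 \<le> \<phi>1 u + l / 2 * (norm (u - x))\<^sup>2"
    and g2: "\<forall>u\<in>X. e2 + m2 / 2 * (norm (u - q))\<^sup>2 \<le> \<phi>2 u + l / 2 * (norm (u - x))\<^sup>2"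
  shows compareL: "(\<forall>a\<in>X. \<forall>b\<in>X. (\<phi>1 a - \<phi>2 a) - (\<phi>1 b - \<phi>2 b) \<le> L * norm (a - b)) \<Longrightarrow>
          (m1 + m2) / 2 * (norm (p - q))\<^sup>2 \<le> L * norm (p - q)"
    and compareD: "(\<forall>a\<in>X. \<bar>\<phi>1 a - \<phi>2 a\<bar> \<le> \<delta>) \<Longrightarrow> (m1 + m2) / 2 * (norm (p - q))\<^sup>2 \<le> 2 * \<delta>"
proof -
  define F1 where "F1 u = \<phi>1 u + l / 2 * (norm (u - x))\<^sup>2" for u
  define F2 where "F2 u = \<phi>2 u + l / 2 * (norm (u - x))\<^sup>2" for u
  have core: "m1 / 2 * (norm (vs n - p))\<^sup>2 + m2 / 2 * (norm (us n - q))\<^sup>2 \<le>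
     ((\<phi>1 (vs n) - \<phi>2 (vs n)) - (\<phi>1 (us n) - \<phi>2 (us n))) + (F2 (vs n) - e2) + (F1 (us n) - e1)" for n
  proof -
    have a: "e1 + m1 / 2 * (norm (vs n - p))\<^sup>2 \<le> \<phi>1 (vs n) + l / 2 * (norm (vs n - x))\<^sup>2" using g1 vs(1) by blast
    have b: "e2 + m2 / 2 * (norm (us n - q))\<^sup>2 \<le> \<phi>2 (us n) + l / 2 * (norm (us n - x))\<^sup>2" using g2 us(1) by blast
    show ?thesis unfolding F1_def F2_def using a b by argo
  qed
  have lhs: "(\<lambda>n. m1 / 2 * (norm (vs n - p))\<^sup>2 + m2 / 2 * (norm (us n - q))\<^sup>2) \<longlonglongrightarrow>
      m1 / 2 * (norm (q - p))\<^sup>2 + m2 / 2 * (norm (p - q))\<^sup>2"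
    by (intro tendsto_intros us(2) vs(2))
  have lhs_eq: "m1 / 2 * (norm (q - p))\<^sup>2 + m2 / 2 * (norm (p - q))\<^sup>2 = (m1 + m2) / 2 * (norm (p - q))\<^sup>2"
    by (simp add: norm_minus_commute algebra_simps add_divide_distrib)
  have err1: "(\<lambda>n. F1 (us n) - e1) \<longlonglongrightarrow> 0" using us(3) unfolding F1_def by (simp add: LIM_zero)
  have err2: "(\<lambda>n. F2 (vs n) - e2) \<longlonglongrightarrow> 0" using vs(3) unfolding F2_def by (simp add: LIM_zero)
  show "(m1 + m2) / 2 * (norm (p - q))\<^sup>2 \<le> L * norm (p - q)"
    if L: "\<forall>a\<in>X. \<forall>b\<in>X. (\<phi>1 a - \<phi>2 a) - (\<phi>1 b - \<phi>2 b) \<le> L * norm (a - b)"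
  proof -
    have rhs: "(\<lambda>n. L * norm (vs n - us n) + (F2 (vs n) - e2) + (F1 (us n) - e1)) \<longlonglongrightarrow> L * norm (q - p) + 0 + 0"
      by (intro tendsto_intros us(2) vs(2) err1 err2)
    have "m1 / 2 * (norm (q - p))\<^sup>2 + m2 / 2 * (norm (p - q))\<^sup>2 \<le> L * norm (q - p) + 0 + 0"
    proof (rule tendsto_le[OF _ rhs lhs])
      show "\<forall>\<^sub>F n in sequentially. m1 / 2 * (norm (vs n - p))\<^sup>2 + m2 / 2 * (norm (us n - q))\<^sup>2 \<le>
          L * norm (vs n - us n) + (F2 (vs n) - e2) + (F1 (us n) - e1)"
      proof (rule always_eventually, rule allI)
        fix n
        have "(\<phi>1 (vs n) - \<phi>2 (vs n)) - (\<phi>1 (us n) - \<phi>2 (us n)) \<le> L * norm (vs n - us n)"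
          using L us(1) vs(1) by blast
        then show "m1 / 2 * (norm (vs n - p))\<^sup>2 + m2 / 2 * (norm (us n - q))\<^sup>2 \<le>
          L * norm (vs n - us n) + (F2 (vs n) - e2) + (F1 (us n) - e1)" using core[of n] by argo
      qed
    qed simp
    then show ?thesis using lhs_eq by (simp add: norm_minus_commute)
  qed
  show "(m1 + m2) / 2 * (norm (p - q))\<^sup>2 \<le> 2 * \<delta>"
    if D: "\<forall>a\<in>X. \<bar>\<phi>1 a - \<phi>2 a\<bar> \<le> \<delta>"
  proof -
    have rhs: "(\<lambda>n. 2 * \<delta> + (F2 (vs n) - e2) + (F1 (us n) - e1)) \<longlonglongrightarrow> 2 * \<delta> + 0 + 0"
      by (intro tendsto_intros err1 err2)
    have "m1 / 2 * (norm (q - p))\<^sup>2 + m2 / 2 * (norm (p - q))\<^sup>2 \<le> 2 * \<delta> + 0 + 0"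
    proof (rule tendsto_le[OF _ rhs lhs])
      show "\<forall>\<^sub>F n in sequentially. m1 / 2 * (norm (vs n - p))\<^sup>2 + m2 / 2 * (norm (us n - q))\<^sup>2 \<le>
          2 * \<delta> + (F2 (vs n) - e2) + (F1 (us n) - e1)"
      proof (rule always_eventually, rule allI)
        fix n
        have "\<bar>\<phi>1 (vs n) - \<phi>2 (vs n)\<bar> \<le> \<delta>" "\<bar>\<phi>1 (us n) - \<phi>2 (us n)\<bar> \<le> \<delta>"
          using D us(1) vs(1) by blast+
        then show "m1 / 2 * (norm (vs n - p))\<^sup>2 + m2 / 2 * (norm (us n - q))\<^sup>2 \<le>
          2 * \<delta> + (F2 (vs n) - e2) + (F1 (us n) - e1)" using core[of n] by argo
      qed
    qed simp
    then show ?thesis using lhs_eq by simp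
  qed
qed



lemma tnorm0: fixes T :: "'b::euclidean_space list \<Rightarrow> 'c::real_normed_vector"
  shows "norm (T []) \<le> tnorm 0 T"
  using tnorm_rep[OF ml_0, of T 0] by simp

lemma P1_fbound:
  fixes X :: "'a::euclidean_space set" and Y :: "'b::euclidean_space set"
    and D :: "nat \<Rightarrow> 'a \<Rightarrow> 'b \<Rightarrow> 'b list \<Rightarrow> real"
  assumes cY: "convex Y" and iY: "interior Y \<noteq> {}"
    and diam: "\<forall>y\<in>Y. \<forall>y'\<in>Y. norm (y - y') \<le> Dm"
    and yd: "y_derivs X Y f k D"
    and A2: "\<forall>x\<in>X. \<forall>x'\<in>X. \<forall>y\<in>Y. \<forall>y'\<in>Y.
          tnorm k (\<lambda>vs. D k x' y' vs - D k x y vs) \<le> \<rho> * norm (y' - y) + \<sigma> * norm (x' - x)"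
    and rho: "\<rho> \<ge> 0" and yh: "yh \<in> Y" and x: "x \<in> X" and y: "y \<in> Y"
  shows "\<bar>f x y - taylor_approx D k yh x y\<bar> \<le> \<rho> * Dm ^ (k + 1) / fact (k + 1)"
proof -
  define s where "s = y - yh"
  have der: "\<forall>j<k. \<forall>z\<in>Y. \<forall>vs. length vs = j \<longrightarrow> ((\<lambda>z'. D j x z' vs) has_derivative (\<lambda>v. D (Suc j) x z (v # vs))) (at z within Y)"
    using yd x unfolding y_derivs_def by blast
  have bnd: "\<forall>t\<in>{0..1}. \<bar>D k x (yh + t *\<^sub>R (y - yh)) (replicate k (y - yh)) - D k x yh (replicate k (y - yh))\<bar> \<le> 0 + (\<rho> * norm s ^ (k + 1)) * t"
  proof
    fix t :: real assume t: "t \<in> {0..1}"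
    define z where "z = yh + t *\<^sub>R (y - yh)"
    have "z = (1 - t) *\<^sub>R yh + t *\<^sub>R y" by (simp add: z_def algebra_simps)
    then have z: "z \<in> Y" using cY yh y t by (simp add: convex_def)
    have mlz: "ml k (\<lambda>vs. D k x z vs - D k x yh vs)"
      by (rule ml_diff) (use ml_D[OF cY iY yd x, of k] z yh in auto)
    have "\<bar>D k x z (replicate k s) - D k x yh (replicate k s)\<bar> \<le> tnorm k (\<lambda>vs. D k x z vs - D k x yh vs) * norm s ^ k"
      using tnorm_rep[OF mlz, of s] by simp
    also have "\<dots> \<le> (\<rho> * norm (z - yh) + \<sigma> * norm (x - x)) * norm s ^ k"
      using A2[rule_format, of x x yh z] x z yh by (intro mult_right_mono) auto
    also have "\<dots> = (\<rho> * norm s ^ (k + 1)) * t"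
    proof -
      have "z - yh = t *\<^sub>R s" by (simp add: z_def s_def)
      then have "norm (z - yh) = t * norm s" using t by simp
      then show ?thesis by (simp add: algebra_simps)
    qed
    finally show "\<bar>D k x (yh + t *\<^sub>R (y - yh)) (replicate k (y - yh)) - D k x yh (replicate k (y - yh))\<bar> \<le> 0 + (\<rho> * norm s ^ (k + 1)) * t"
      by (simp add: z_def s_def)
  qed
  have A: "\<bar>D 0 x y [] - (\<Sum>j\<le>k. D j x yh (replicate j (y - yh)) / fact j)\<bar> \<le> 0 / fact k + (\<rho> * norm s ^ (k + 1)) / fact (Suc k)"
    by (rule ytaylor[OF cY yh y der bnd])
  have B: "D 0 x y [] = f x y" using yd x y unfolding y_derivs_def by blast
  have "\<rho> * norm s ^ (k + 1) \<le> \<rho> * Dm ^ (k + 1)"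
    using diam y yh rho unfolding s_def by (intro mult_left_mono power_mono) auto
  then have C: "(\<rho> * norm s ^ (k + 1)) / fact (Suc k) \<le> \<rho> * Dm ^ (k + 1) / fact (k + 1)"
    by (simp add: divide_right_mono)
  show ?thesis unfolding taylor_approx_def using A B C by simp
qed



lemma P2_Rlip:
  fixes X :: "'a::euclidean_space set" and Y :: "'b::euclidean_space set"
    and D :: "nat \<Rightarrow> 'a \<Rightarrow> 'b \<Rightarrow> 'b list \<Rightarrow> real"
  assumes cY: "convex Y" and iY: "interior Y \<noteq> {}"
    and diam: "\<forall>y\<in>Y. \<forall>y'\<in>Y. norm (y - y') \<le> Dm"
    and yd: "y_derivs X Y f k D"
    and A2: "\<forall>x\<in>X. \<forall>x'\<in>X. \<forall>y\<in>Y. \<forall>y'\<in>Y.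
          tnorm k (\<lambda>vs. D k x' y' vs - D k x y vs) \<le> \<rho> * norm (y' - y) + \<sigma> * norm (x' - x)"
    and sig: "\<sigma> \<ge> 0" and yh: "yh \<in> Y" and a: "a \<in> X" and b: "b \<in> X" and y: "y \<in> Y"
  shows "\<bar>(f a y - taylor_approx D k yh a y) - (f b y - taylor_approx D k yh b y)\<bar>
           \<le> 2 * \<sigma> * Dm ^ k / fact k * norm (a - b)"
proof -
  define s where "s = y - yh"
  define E where "E j z vs = D j a z vs - D j b z vs" for j z vs
  have der: "\<forall>j<k. \<forall>z\<in>Y. \<forall>vs. length vs = j \<longrightarrow> ((\<lambda>z'. E j z' vs) has_derivative (\<lambda>v. E (Suc j) z (v # vs))) (at z within Y)"
    using yd a b unfolding y_derivs_def E_def by (auto intro!: has_derivative_diff)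
  have one: "\<bar>E k z (replicate k s)\<bar> \<le> \<sigma> * norm (a - b) * norm s ^ k" if z: "z \<in> Y" for z
  proof -
    have mlz: "ml k (\<lambda>vs. D k a z vs - D k b z vs)"
      by (rule ml_diff) (use ml_D[OF cY iY yd a, of k] ml_D[OF cY iY yd b, of k] z in auto)
    have "\<bar>E k z (replicate k s)\<bar> \<le> tnorm k (\<lambda>vs. D k a z vs - D k b z vs) * norm s ^ k"
      using tnorm_rep[OF mlz, of s] by (simp add: E_def)
    also have "\<dots> \<le> (\<rho> * norm (z - z) + \<sigma> * norm (a - b)) * norm s ^ k"
      using A2[rule_format, of b a z z] a b z by (intro mult_right_mono) auto
    finally show ?thesis by simp
  qed
  have bnd: "\<forall>t\<in>{0..1}. \<bar>E k (yh + t *\<^sub>R (y - yh)) (replicate k (y - yh)) - E k yh (replicate k (y - yh))\<bar>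
      \<le> 2 * \<sigma> * norm (a - b) * norm s ^ k + 0 * t"
  proof
    fix t :: real assume t: "t \<in> {0..1}"
    define z where "z = yh + t *\<^sub>R (y - yh)"
    have "z = (1 - t) *\<^sub>R yh + t *\<^sub>R y" by (simp add: z_def algebra_simps)
    then have z: "z \<in> Y" using cY yh y t by (simp add: convex_def)
    have "\<bar>E k z (replicate k s) - E k yh (replicate k s)\<bar> \<le> \<bar>E k z (replicate k s)\<bar> + \<bar>E k yh (replicate k s)\<bar>"
      by (rule abs_triangle_ineq4)
    also have "\<dots> \<le> 2 * \<sigma> * norm (a - b) * norm s ^ k" using one[OF z] one[OF yh] by simp
    finally show "\<bar>E k (yh + t *\<^sub>R (y - yh)) (replicate k (y - yh)) - E k yh (replicate k (y - yh))\<bar>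
      \<le> 2 * \<sigma> * norm (a - b) * norm s ^ k + 0 * t" by (simp add: z_def s_def)
  qed
  have A: "\<bar>E 0 y [] - (\<Sum>j\<le>k. E j yh (replicate j (y - yh)) / fact j)\<bar> \<le> 2 * \<sigma> * norm (a - b) * norm s ^ k / fact k + 0 / fact (Suc k)"
    by (rule ytaylor[OF cY yh y der bnd])
  have B: "E 0 y [] = f a y - f b y" using yd a b y unfolding y_derivs_def E_def by auto
  have C: "(\<Sum>j\<le>k. E j yh (replicate j (y - yh)) / fact j) = taylor_approx D k yh a y - taylor_approx D k yh b y"
    unfolding taylor_approx_def E_def by (simp add: sum_subtractf diff_divide_distrib)
  have "norm s ^ k \<le> Dm ^ k" using diam y yh unfolding s_def by (intro power_mono) auto
  then have "(2 * \<sigma> * norm (a - b)) * norm s ^ k \<le> (2 * \<sigma> * norm (a - b)) * Dm ^ k"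
    using sig by (intro mult_left_mono) auto
  from divide_right_mono[OF this, of "fact k"]
  have Dd: "2 * \<sigma> * norm (a - b) * norm s ^ k / fact k \<le> 2 * \<sigma> * Dm ^ k / fact k * norm (a - b)"
    by (simp add: algebra_simps)
  have "\<bar>(f a y - taylor_approx D k yh a y) - (f b y - taylor_approx D k yh b y)\<bar>
      = \<bar>E 0 y [] - (\<Sum>j\<le>k. E j yh (replicate j (y - yh)) / fact j)\<bar>" unfolding B C by (simp add: algebra_simps)
  also have "\<dots> \<le> 2 * \<sigma> * Dm ^ k / fact k * norm (a - b)" using A Dd by simp
  finally show ?thesis .
qed

lemma P3_Rwc:
  fixes X :: "'a::euclidean_space set" and Y :: "'b::euclidean_space set"
    and D :: "nat \<Rightarrow> 'a \<Rightarrow> 'b \<Rightarrow> 'b list \<Rightarrow> real"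
  assumes cX: "convex X" and iX: "interior X \<noteq> {}" and cY: "convex Y" and iY: "interior Y \<noteq> {}"
    and diam: "\<forall>y\<in>Y. \<forall>y'\<in>Y. norm (y - y') \<le> Dm"
    and yd: "y_derivs X Y f k D"
    and A3_ex: "xy_deriv X Y k (D k) Dx"
    and A3_lip: "\<forall>x\<in>X. \<forall>x'\<in>X. \<forall>y\<in>Y. tnorm k (\<lambda>vs. Dx x' y vs - Dx x y vs) \<le> \<tau> * norm (x' - x)"
    and tau: "\<tau> \<ge> 0" and yh: "yh \<in> Y" and u: "u \<in> X" and v: "v \<in> X" and y: "y \<in> Y" and th: "\<theta> \<in> {0..1}"
  shows "\<bar>\<theta> * (f u y - taylor_approx D k yh u y) + (1 - \<theta>) * (f v y - taylor_approx D k yh v y)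
          - (f (\<theta> *\<^sub>R u + (1 - \<theta>) *\<^sub>R v) y - taylor_approx D k yh (\<theta> *\<^sub>R u + (1 - \<theta>) *\<^sub>R v) y)\<bar>
         \<le> \<tau> * Dm ^ k / fact k * (\<theta> * (1 - \<theta>) * (norm (u - v))\<^sup>2)"
proof -
  define w where "w = \<theta> *\<^sub>R u + (1 - \<theta>) *\<^sub>R v"
  have w: "w \<in> X" using cX u v th unfolding w_def convex_def by auto
  define s where "s = y - yh"
  define N where "N = \<theta> * (1 - \<theta>) * (norm (u - v))\<^sup>2"
  have N0: "N \<ge> 0" using th by (simp add: N_def)
  define E where "E j z vs = \<theta> * D j u z vs + (1 - \<theta>) * D j v z vs - D j w z vs" for j z vs
  have der: "\<forall>j<k. \<forall>z\<in>Y. \<forall>vs. length vs = j \<longrightarrow> ((\<lambda>z'. E j z' vs) has_derivative (\<lambda>v. E (Suc j) z (v # vs))) (at z within Y)"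
    using yd u v w unfolding y_derivs_def E_def
    by (auto intro!: has_derivative_diff has_derivative_add has_derivative_mult_right)
  have one: "\<bar>E k z (replicate k s)\<bar> \<le> \<tau> * norm s ^ k / 2 * N" if z: "z \<in> Y" for z
  proof -
    define h where "h x' = D k x' z (replicate k s)" for x'
    define G where "G x' = Dx x' z (replicate k s)" for x'
    have dh: "\<forall>x\<in>X. (h has_derivative (\<lambda>d. G x \<bullet> d)) (at x within X)"
      using A3_ex z unfolding xy_deriv_def h_def[abs_def] G_def by auto
    have lip: "\<forall>x\<in>X. \<forall>x'\<in>X. norm (G x' - G x) \<le> (\<tau> * norm s ^ k) * norm (x' - x)"
    proof (intro ballI)
      fix x x' assume x: "x \<in> X" and x': "x' \<in> X"
      have mlx: "ml k (\<lambda>vs. Dx x' z vs - Dx x z vs)"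
        by (rule ml_diff) (use ml_Dx[OF cX iX cY iY yd A3_ex] x x' z in auto)
      have "norm (G x' - G x) \<le> tnorm k (\<lambda>vs. Dx x' z vs - Dx x z vs) * norm s ^ k"
        using tnorm_rep[OF mlx, of s] by (simp add: G_def)
      also have "\<dots> \<le> (\<tau> * norm (x' - x)) * norm s ^ k"
        using A3_lip x x' z by (intro mult_right_mono) auto
      finally show "norm (G x' - G x) \<le> (\<tau> * norm s ^ k) * norm (x' - x)" by (simp add: algebra_simps)
    qed
    have "\<bar>\<theta> * h u + (1 - \<theta>) * h v - h w\<bar> \<le> (\<tau> * norm s ^ k) / 2 * \<theta> * (1 - \<theta>) * (norm (u - v))\<^sup>2"
      unfolding w_def by (rule smooth_wc[OF cX dh lip u v th])
    then show ?thesis unfolding E_def h_def N_def by (simp add: algebra_simps)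
  qed
  have bnd: "\<forall>t\<in>{0..1}. \<bar>E k (yh + t *\<^sub>R (y - yh)) (replicate k (y - yh)) - E k yh (replicate k (y - yh))\<bar>
      \<le> \<tau> * norm s ^ k * N + 0 * t"
  proof
    fix t :: real assume t: "t \<in> {0..1}"
    define z where "z = yh + t *\<^sub>R (y - yh)"
    have "z = (1 - t) *\<^sub>R yh + t *\<^sub>R y" by (simp add: z_def algebra_simps)
    then have z: "z \<in> Y" using cY yh y t by (simp add: convex_def)
    have "\<bar>E k z (replicate k s) - E k yh (replicate k s)\<bar> \<le> \<bar>E k z (replicate k s)\<bar> + \<bar>E k yh (replicate k s)\<bar>"
      by (rule abs_triangle_ineq4)
    also have "\<dots> \<le> \<tau> * norm s ^ k * N" using one[OF z] one[OF yh] by simp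
    finally show "\<bar>E k (yh + t *\<^sub>R (y - yh)) (replicate k (y - yh)) - E k yh (replicate k (y - yh))\<bar>
      \<le> \<tau> * norm s ^ k * N + 0 * t" by (simp add: z_def s_def)
  qed
  have A: "\<bar>E 0 y [] - (\<Sum>j\<le>k. E j yh (replicate j (y - yh)) / fact j)\<bar> \<le> \<tau> * norm s ^ k * N / fact k + 0 / fact (Suc k)"
    by (rule ytaylor[OF cY yh y der bnd])
  have B: "E 0 y [] = \<theta> * f u y + (1 - \<theta>) * f v y - f w y" using yd u v w y unfolding y_derivs_def E_def by auto
  have C: "(\<Sum>j\<le>k. E j yh (replicate j (y - yh)) / fact j)
      = \<theta> * taylor_approx D k yh u y + (1 - \<theta>) * taylor_approx D k yh v y - taylor_approx D k yh w y"
    unfolding taylor_approx_def E_def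
    by (simp add: sum_subtractf sum.distrib sum_distrib_left diff_divide_distrib add_divide_distrib)
  have "norm s ^ k \<le> Dm ^ k" using diam y yh unfolding s_def by (intro power_mono) auto
  then have "(\<tau> * N) * norm s ^ k \<le> (\<tau> * N) * Dm ^ k"
    using tau N0 by (intro mult_left_mono) auto
  from divide_right_mono[OF this, of "fact k"]
  have Dd: "\<tau> * norm s ^ k * N / fact k \<le> \<tau> * Dm ^ k / fact k * N"
    by (simp add: algebra_simps)
  have "\<bar>\<theta> * (f u y - taylor_approx D k yh u y) + (1 - \<theta>) * (f v y - taylor_approx D k yh v y)
          - (f w y - taylor_approx D k yh w y)\<bar>
      = \<bar>E 0 y [] - (\<Sum>j\<le>k. E j yh (replicate j (y - yh)) / fact j)\<bar>" unfolding B C by (simp add: algebra_simps)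
  also have "\<dots> \<le> \<tau> * Dm ^ k / fact k * N" using A Dd by simp
  finally show ?thesis unfolding w_def N_def .
qed



lemma P4_mu:
  fixes X :: "'a::euclidean_space set" and Y :: "'b::euclidean_space set"
  assumes cX: "convex X" and A1g: "x_grad X Y f Gx"
    and A1l: "\<forall>x\<in>X. \<forall>x'\<in>X. \<forall>y\<in>Y. \<forall>y'\<in>Y.
          norm (Gx x' y' - Gx x y) \<le> lam * norm (x' - x) + \<mu> * norm (y' - y)"
    and diam: "\<forall>y\<in>Y. \<forall>y'\<in>Y. norm (y - y') \<le> Dm" and mu: "\<mu> \<ge> 0"
    and a: "a \<in> X" and b: "b \<in> X" and y: "y \<in> Y" and y': "y' \<in> Y"
  shows "\<bar>(f a y - f b y) - (f a y' - f b y')\<bar> \<le> \<mu> * Dm * norm (a - b)"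
proof -
  define q where "q x = f x y - f x y'" for x
  have dq: "(q has_derivative (\<lambda>u. Gx x y \<bullet> u - Gx x y' \<bullet> u)) (at x within X)" if "x \<in> X" for x
    unfolding q_def[abs_def] using A1g that y y' unfolding x_grad_def by (intro has_derivative_diff) auto
  have on: "onorm (\<lambda>u. Gx x y \<bullet> u - Gx x y' \<bullet> u) \<le> \<mu> * Dm" if x: "x \<in> X" for x
  proof (rule onorm_le)
    fix u :: 'a
    have "norm (Gx x y \<bullet> u - Gx x y' \<bullet> u) = \<bar>(Gx x y - Gx x y') \<bullet> u\<bar>" by (simp add: inner_diff_left)
    also have "\<dots> \<le> norm (Gx x y - Gx x y') * norm u" by (rule Cauchy_Schwarz_ineq2)
    also have "norm (Gx x y - Gx x y') \<le> lam * norm (x - x) + \<mu> * norm (y - y')"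
      using A1l[rule_format, of x x y' y] x y y' by simp
    also have "\<dots> \<le> \<mu> * Dm" using diam y y' mu by (simp add: mult_left_mono)
    finally show "norm (Gx x y \<bullet> u - Gx x y' \<bullet> u) \<le> \<mu> * Dm * norm u" by (simp add: mult_right_mono)
  qed
  have "norm (q a - q b) \<le> \<mu> * Dm * norm (a - b)"
    by (rule differentiable_bound[OF cX dq on a b])
  then show ?thesis unfolding q_def by (simp add: algebra_simps)
qed

lemma P5_fwc:
  fixes X :: "'a::euclidean_space set" and Y :: "'b::euclidean_space set"
  assumes cX: "convex X" and A1g: "x_grad X Y f Gx"
    and A1l: "\<forall>x\<in>X. \<forall>x'\<in>X. \<forall>y\<in>Y. \<forall>y'\<in>Y.
          norm (Gx x' y' - Gx x y) \<le> lam * norm (x' - x) + \<mu> * norm (y' - y)"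
    and y: "y \<in> Y"
  shows "wc X (\<lambda>x. f x y) lam"
  unfolding wc_def
proof (intro ballI)
  fix u v t assume u: "u \<in> X" and v: "v \<in> X" and t: "t \<in> {0..1::real}"
  have dh: "\<forall>x\<in>X. ((\<lambda>x. f x y) has_derivative (\<lambda>d. Gx x y \<bullet> d)) (at x within X)"
    using A1g y unfolding x_grad_def by auto
  have lip: "\<forall>x\<in>X. \<forall>x'\<in>X. norm (Gx x' y - Gx x y) \<le> lam * norm (x' - x)"
    using A1l y by fastforce
  have "\<bar>t * f u y + (1 - t) * f v y - f (t *\<^sub>R u + (1 - t) *\<^sub>R v) y\<bar> \<le> lam / 2 * t * (1 - t) * (norm (u - v))\<^sup>2"
    by (rule smooth_wc[OF cX dh lip u v t])
  then show "f (t *\<^sub>R u + (1 - t) *\<^sub>R v) y \<le> t * f u y + (1 - t) * f v y + lam / 2 * t * (1 - t) * (norm (u - v))\<^sup>2"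
    by linarith
qed

lemma wc_primal:
  assumes cX: "convex X" and ne: "Y \<noteq> {}" and w: "\<forall>y\<in>Y. wc X (\<lambda>x. g x y) c"
    and bdd: "\<forall>x\<in>X. bdd_above (g x ` Y)"
  shows "wc X (primal Y g) c"
  unfolding wc_def
proof (intro ballI)
  fix u v t assume u: "u \<in> X" and v: "v \<in> X" and t: "t \<in> {0..1::real}"
  have wX: "t *\<^sub>R u + (1 - t) *\<^sub>R v \<in> X" using cX u v t unfolding convex_def by auto
  show "primal Y g (t *\<^sub>R u + (1 - t) *\<^sub>R v) \<le> t * primal Y g u + (1 - t) * primal Y g v + c / 2 * t * (1 - t) * (norm (u - v))\<^sup>2"
    unfolding primal_def
  proof (rule cSUP_least[OF ne])
    fix y assume y: "y \<in> Y"
    have "g (t *\<^sub>R u + (1 - t) *\<^sub>R v) y \<le> t * g u y + (1 - t) * g v y + c / 2 * t * (1 - t) * (norm (u - v))\<^sup>2"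
      using w y u v t unfolding wc_def by blast
    also have "t * g u y \<le> t * (SUP y\<in>Y. g u y)"
      using t cSUP_upper[OF y bdd[rule_format, OF u]] by (intro mult_left_mono) auto
    also have "(1 - t) * g v y \<le> (1 - t) * (SUP y\<in>Y. g v y)"
      using t cSUP_upper[OF y bdd[rule_format, OF v]] by (intro mult_left_mono) auto
    finally show "g (t *\<^sub>R u + (1 - t) *\<^sub>R v) y \<le> t * (SUP y\<in>Y. g u y) + (1 - t) * (SUP y\<in>Y. g v y) + c / 2 * t * (1 - t) * (norm (u - v))\<^sup>2"
      by simp
  qed
qed

lemma primal_lipdiff:
  assumes ne: "Y \<noteq> {}" and b1a: "bdd_above (g1 a ` Y)" and b1b: "bdd_above (g1 b ` Y)"
    and b2a: "bdd_above (g2 a ` Y)" and b2b: "bdd_above (g2 b ` Y)"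
    and H: "\<forall>y\<in>Y. \<forall>y'\<in>Y. g1 a y + g2 b y' \<le> g1 b y + g2 a y' + L"
  shows "(primal Y g1 a - primal Y g2 a) - (primal Y g1 b - primal Y g2 b) \<le> L"
proof -
  have step1: "primal Y g1 a \<le> primal Y g1 b + primal Y g2 a + L - g2 b y'" if y': "y' \<in> Y" for y'
    unfolding primal_def
  proof (rule cSUP_least[OF ne])
    fix y assume y: "y \<in> Y"
    have "g1 b y \<le> (SUP y\<in>Y. g1 b y)" by (rule cSUP_upper[OF y b1b])
    moreover have "g2 a y' \<le> (SUP y\<in>Y. g2 a y)" by (rule cSUP_upper[OF y' b2a])
    ultimately show "g1 a y \<le> (SUP y\<in>Y. g1 b y) + (SUP y\<in>Y. g2 a y) + L - g2 b y'" using H y y' by fastforce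
  qed
  have "primal Y g2 b \<le> primal Y g1 b + primal Y g2 a + L - primal Y g1 a"
    unfolding primal_def
  proof (rule cSUP_least[OF ne])
    fix y' assume y': "y' \<in> Y"
    show "g2 b y' \<le> (SUP y\<in>Y. g1 b y) + (SUP y\<in>Y. g2 a y) + L - (SUP y\<in>Y. g1 a y)"
      using step1[OF y'] unfolding primal_def by linarith
  qed
  then show ?thesis by linarith
qed

lemma primal_close:
  assumes ne: "Y \<noteq> {}" and b1: "bdd_above (g1 x ` Y)" and b2: "bdd_above (g2 x ` Y)"
    and H: "\<forall>y\<in>Y. \<bar>g1 x y - g2 x y\<bar> \<le> \<delta>"
  shows "\<bar>primal Y g1 x - primal Y g2 x\<bar> \<le> \<delta>"
proof -
  have "primal Y g1 x \<le> primal Y g2 x + \<delta>" unfolding primal_def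
  proof (rule cSUP_least[OF ne])
    fix y assume y: "y \<in> Y"
    have "g2 x y \<le> (SUP y\<in>Y. g2 x y)" by (rule cSUP_upper[OF y b2])
    then show "g1 x y \<le> (SUP y\<in>Y. g2 x y) + \<delta>" using H y by fastforce
  qed
  moreover have "primal Y g2 x \<le> primal Y g1 x + \<delta>" unfolding primal_def
  proof (rule cSUP_least[OF ne])
    fix y assume y: "y \<in> Y"
    have "g1 x y \<le> (SUP y\<in>Y. g1 x y)" by (rule cSUP_upper[OF y b1])
    then show "g2 x y \<le> (SUP y\<in>Y. g1 x y) + \<delta>" using H y by fastforce
  qed
  ultimately show ?thesis by linarith
qed

lemma bdd_below_quad:
  fixes \<phi> :: "'a::real_inner \<Rightarrow> real"
  assumes al: "a < l" and H: "\<forall>u\<in>X. c0 + g \<bullet> (u - x) - a / 2 * (norm (u - x))\<^sup>2 \<le> \<phi> u"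
  shows "bdd_below ((\<lambda>u. \<phi> u + l / 2 * (norm (u - x))\<^sup>2) ` X)"
proof (rule bdd_belowI2)
  fix u assume u: "u \<in> X"
  define r where "r = norm (u - x)"
  have r0: "r \<ge> 0" by (simp add: r_def)
  have gi: "g \<bullet> (u - x) \<ge> - (norm g * r)"
    using Cauchy_Schwarz_ineq2[of g "u - x"] unfolding r_def by linarith
  have sq: "0 \<le> ((l - a) * r - norm g)\<^sup>2 / (2 * (l - a))" using al by simp
  have "((l - a) * r - norm g)\<^sup>2 / (2 * (l - a)) = (l - a) / 2 * r\<^sup>2 - norm g * r + (norm g)\<^sup>2 / (2 * (l - a))"
    using al by (simp add: power2_eq_square field_simps)
  then have "c0 - (norm g)\<^sup>2 / (2 * (l - a)) \<le> c0 - norm g * r + (l - a) / 2 * r\<^sup>2" using sq by linarith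
  also have "\<dots> \<le> \<phi> u + l / 2 * r\<^sup>2"
  proof -
    have "c0 + g \<bullet> (u - x) - a / 2 * r\<^sup>2 \<le> \<phi> u" using H u unfolding r_def by blast
    moreover have "(l - a) / 2 * r\<^sup>2 = l / 2 * r\<^sup>2 - a / 2 * r\<^sup>2" by (simp add: algebra_simps diff_divide_distrib)
    ultimately show ?thesis using gi by linarith
  qed
  finally show "c0 - (norm g)\<^sup>2 / (2 * (l - a)) \<le> \<phi> u + l / 2 * (norm (u - x))\<^sup>2" unfolding r_def .
qed

lemma final_num:
  fixes lb r L \<delta> eps nG nGh :: real
  assumes lb: "lb > 0" and r: "r \<ge> 0" and h: "nGh \<le> eps / 6" and nGh: "nGh \<ge> 0"
    and G: "nG \<le> nGh + 2 * lb * r"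
    and cases: "(lb * r\<^sup>2 \<le> L * r \<and> L \<le> eps / 24) \<or> (lb * r\<^sup>2 \<le> 2 * \<delta> \<and> lb * \<delta> \<le> 50 * (eps / 24)\<^sup>2)"
  shows "nG \<le> eps"
proof -
  have e0: "eps \<ge> 0" using h nGh by linarith
  from cases show ?thesis
  proof
    assume c: "lb * r\<^sup>2 \<le> L * r \<and> L \<le> eps / 24"
    have "2 * lb * r \<le> eps / 12"
    proof (cases "r = 0")
      case True then show ?thesis using e0 by simp
    next
      case False
      then have rp: "r > 0" using r by simp
      have "(lb * r) * r \<le> L * r" using c by (simp add: power2_eq_square mult.assoc)
      then have "lb * r \<le> L" using rp by simp
      then show ?thesis using c by linarith
    qed
    then show ?thesis using G h e0 by linarith
  next
    assume c: "lb * r\<^sup>2 \<le> 2 * \<delta> \<and> lb * \<delta> \<le> 50 * (eps / 24)\<^sup>2"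
    have "(2 * lb * r)\<^sup>2 = 4 * lb * (lb * r\<^sup>2)" by (simp add: power2_eq_square)
    also have "\<dots> \<le> 4 * lb * (2 * \<delta>)" using c lb by (intro mult_left_mono) auto
    also have "\<dots> = 8 * (lb * \<delta>)" by simp
    also have "\<dots> \<le> 8 * (50 * (eps / 24)\<^sup>2)" using c by linarith
    also have "\<dots> = (20 * eps / 24)\<^sup>2" by (simp add: power2_eq_square)
    finally have "(2 * lb * r)\<^sup>2 \<le> (20 * eps / 24)\<^sup>2" .
    then have "2 * lb * r \<le> 20 * eps / 24" by (rule power2_le_imp_le) (use e0 in simp)
    then show ?thesis using G h e0 by linarith
  qed
qed



lemma fh_bounded:
  fixes X :: "'a::euclidean_space set" and Y :: "'b::euclidean_space set"
    and D :: "nat \<Rightarrow> 'a \<Rightarrow> 'b \<Rightarrow> 'b list \<Rightarrow> real"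
  assumes cY: "convex Y" and iY: "interior Y \<noteq> {}"
    and diam: "\<forall>y\<in>Y. \<forall>y'\<in>Y. norm (y - y') \<le> Dm"
    and yd: "y_derivs X Y f k D" and yh: "yh \<in> Y" and x: "x \<in> X"
  shows "\<exists>M. \<forall>y\<in>Y. \<bar>taylor_approx D k yh x y\<bar> \<le> M"
proof (intro exI ballI)
  fix y assume y: "y \<in> Y"
  define s where "s = y - yh"
  have ns: "norm s \<le> Dm" using diam y yh unfolding s_def by auto
  have "\<bar>taylor_approx D k yh x y\<bar> \<le> (\<Sum>j\<le>k. \<bar>D j x yh (replicate j s) / fact j\<bar>)"
    unfolding taylor_approx_def s_def by (rule sum_abs)
  also have "\<dots> \<le> (\<Sum>j\<le>k. \<bar>tnorm j (D j x yh)\<bar> * Dm ^ j / fact j)"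
  proof (rule sum_mono)
    fix j assume j: "j \<in> {..k}"
    have mlj: "ml j (D j x yh)" using ml_D[OF cY iY yd x, of j] j yh by auto
    have "\<bar>D j x yh (replicate j s)\<bar> \<le> tnorm j (D j x yh) * norm s ^ j" using tnorm_rep[OF mlj, of s] by simp
    also have "\<dots> \<le> \<bar>tnorm j (D j x yh)\<bar> * norm s ^ j" by (intro mult_right_mono) auto
    also have "\<dots> \<le> \<bar>tnorm j (D j x yh)\<bar> * Dm ^ j" using ns by (intro mult_left_mono power_mono) auto
    finally have "\<bar>D j x yh (replicate j s)\<bar> \<le> \<bar>tnorm j (D j x yh)\<bar> * Dm ^ j" .
    then show "\<bar>D j x yh (replicate j s) / fact j\<bar> \<le> \<bar>tnorm j (D j x yh)\<bar> * Dm ^ j / fact j"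
      by (simp add: divide_right_mono)
  qed
  finally show "\<bar>taylor_approx D k yh x y\<bar> \<le> (\<Sum>j\<le>k. \<bar>tnorm j (D j x yh)\<bar> * Dm ^ j / fact j)" .
qed

lemma arith_wc:
  fixes Fw Fu Fv Hw Hu Hv t N a b c :: real
  assumes "Fw \<le> t * Fu + (1 - t) * Fv + a / 2 * t * (1 - t) * N"
    and "\<bar>t * (Fu - Hu) + (1 - t) * (Fv - Hv) - (Fw - Hw)\<bar> \<le> c * (t * (1 - t) * N)"
    and "b = a + 2 * c"
  shows "Hw \<le> t * Hu + (1 - t) * Hv + b / 2 * t * (1 - t) * N"
proof -
  have e1: "t * (Fu - Hu) + (1 - t) * (Fv - Hv) - (Fw - Hw) = (t * Fu + (1 - t) * Fv - Fw) - (t * Hu + (1 - t) * Hv - Hw)"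
    by (simp add: algebra_simps)
  have e2: "b / 2 * t * (1 - t) * N = a / 2 * t * (1 - t) * N + c * (t * (1 - t) * N)"
    using assms(3) by (simp add: field_simps)
  show ?thesis using assms(1,2) e1 e2 by argo
qed



theorem theorem1:
  fixes X :: "'a::euclidean_space set" and Y :: "'b::euclidean_space set"
    and f :: "'a \<Rightarrow> 'b \<Rightarrow> real"
    and k :: nat and Dm lam \<mu> \<rho> \<sigma> \<tau> eps :: real
    and Gx :: "'a \<Rightarrow> 'b \<Rightarrow> 'a"
    and D :: "nat \<Rightarrow> 'a \<Rightarrow> 'b \<Rightarrow> 'b list \<Rightarrow> real"
    and Dx :: "'a \<Rightarrow> 'b \<Rightarrow> 'b list \<Rightarrow> 'a"
    and yhat :: 'b and xs :: 'a
  assumes convX: "convex X" and intX: "interior X \<noteq> {}"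
    and convY: "convex Y" and intY: "interior Y \<noteq> {}" and compY: "compact Y"
    and diam: "\<forall>y\<in>Y. \<forall>y'\<in>Y. norm (y - y') \<le> Dm"
    (* (A1) *)
    and A1_grad: "x_grad X Y f Gx"
    and A1_lip: "\<forall>x\<in>X. \<forall>x'\<in>X. \<forall>y\<in>Y. \<forall>y'\<in>Y.
          norm (Gx x' y' - Gx x y) \<le> lam * norm (x' - x) + \<mu> * norm (y' - y)"
    and lam_pos: "lam > 0" and mu_nn: "\<mu> \<ge> 0"
    (* (A2) *)
    and A2_ex: "y_derivs X Y f k D"
    and A2_lip: "\<forall>x\<in>X. \<forall>x'\<in>X. \<forall>y\<in>Y. \<forall>y'\<in>Y.
          tnorm k (\<lambda>vs. D k x' y' vs - D k x y vs) \<le> \<rho> * norm (y' - y) + \<sigma> * norm (x' - x)"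
    and rho_nn: "\<rho> \<ge> 0" and sigma_nn: "\<sigma> \<ge> 0"
    (* (A3) *)
    and A3_ex: "xy_deriv X Y k (D k) Dx"
    and A3_lip: "\<forall>x\<in>X. \<forall>x'\<in>X. \<forall>y\<in>Y.
          tnorm k (\<lambda>vs. Dx x' y vs - Dx x y vs) \<le> \<tau> * norm (x' - x)"
    and tau_nn: "\<tau> \<ge> 0"
    (* (A4) *)
    and A4: "{(x, y). x \<in> X \<and> y \<in> Y \<and> \<not> xxy_exists X k Dx x y} \<in> sets lebesgue"
    (* expansion center and surrogate FOSP *)
    and yhat: "yhat \<in> Y"
    and fosp: "is_fosp X Y (taylor_approx D k yhat) (eps / 6)
                 (2 * (lam + (if k \<ge> 1 then 2 * \<tau> * Dm ^ k / fact k else 0))) xs"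
    and cond0: "k = 0 \<Longrightarrow> min (\<mu> * Dm) (min (2 * \<sigma>) (sqrt (lam * \<rho> * Dm / 50))) \<le> eps / 24"
    and cond1: "k \<ge> 1 \<Longrightarrow>
          min (\<mu> * Dm + 2 * \<sigma> * Dm ^ k / fact k)
              (sqrt ((lam + 2 * \<tau> * Dm ^ k / fact k) * \<rho> * Dm ^ (k + 1) / (50 * fact (k + 1))))
            \<le> eps / 24"
  shows "is_fosp X Y f eps (2 * (lam + (if k \<ge> 1 then 2 * \<tau> * Dm ^ k / fact k else 0))) xs"
proof -
  have ne_Y: "Y \<noteq> {}" using yhat by auto
  have xsX: "xs \<in> X" using fosp unfolding is_fosp_def by blast
  have ne_X: "X \<noteq> {}" using xsX by auto
  have Dm0: "Dm \<ge> 0" using diam yhat by force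
  define lb where "lb = lam + (if k \<ge> 1 then 2 * \<tau> * Dm ^ k / fact k else 0)"
  define l where "l = 2 * lb"
  define fh where "fh = taylor_approx D k yhat"
  define \<delta> where "\<delta> = \<rho> * Dm ^ (k + 1) / fact (k + 1)"
  define \<psi> where "\<psi> = primal Y f"
  define \<psi>h where "\<psi>h = primal Y fh"
  have extra0: "2 * \<tau> * Dm ^ k / fact k \<ge> 0" using tau_nn Dm0 by simp
  have lb_ge: "lb \<ge> lam" unfolding lb_def using extra0 by simp
  have lb_pos: "lb > 0" using lb_ge lam_pos by simp
  have l_pos: "l > 0" using lb_pos by (simp add: l_def)
  have fosp': "is_fosp X Y fh (eps / 6) l xs" using fosp unfolding fh_def l_def lb_def .
  have close: "\<forall>x\<in>X. \<forall>y\<in>Y. \<bar>f x y - fh x y\<bar> \<le> \<delta>"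
    unfolding fh_def \<delta>_def using P1_fbound[OF convY intY diam A2_ex A2_lip rho_nn yhat] by blast
  have bddh: "bdd_above (fh x ` Y)" and bddf: "bdd_above (f x ` Y)" if x: "x \<in> X" for x
  proof -
    obtain M where M: "\<forall>y\<in>Y. \<bar>fh x y\<bar> \<le> M"
      using fh_bounded[OF convY intY diam A2_ex yhat x] unfolding fh_def by blast
    show "bdd_above (fh x ` Y)" using M by (intro bdd_aboveI2[of _ _ M]) auto
    have "f x y \<le> M + \<delta>" if y: "y \<in> Y" for y using M close x y by fastforce
    then show "bdd_above (f x ` Y)" by (intro bdd_aboveI2) auto
  qed
  have fh0: "fh x y = f x yhat" if "k = 0" "x \<in> X" for x y
    using A2_ex that yhat unfolding fh_def taylor_approx_def y_derivs_def by auto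
  have wcf: "\<forall>y\<in>Y. wc X (\<lambda>x. f x y) lam" using P5_fwc[OF convX A1_grad A1_lip] by blast
  have wcfh: "\<forall>y\<in>Y. wc X (\<lambda>x. fh x y) lb"
  proof
    fix y assume y: "y \<in> Y"
    show "wc X (\<lambda>x. fh x y) lb"
    proof (cases "k = 0")
      case True
      have "lb = lam" using True by (simp add: lb_def)
      moreover have "wc X (\<lambda>x. f x yhat) lam" using wcf yhat by blast
      ultimately show ?thesis unfolding wc_def using fh0[OF True] convX
        by (simp add: convex_def)
    next
      case False
      then have k1: "k \<ge> 1" by simp
      have lbk: "lb = lam + 2 * (\<tau> * Dm ^ k / fact k)" using k1 by (simp add: lb_def)
      show ?thesis unfolding wc_def
      proof (intro ballI)
        fix u v t assume u: "u \<in> X" and v: "v \<in> X" and t: "t \<in> {0..1::real}"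
        have A: "f (t *\<^sub>R u + (1 - t) *\<^sub>R v) y \<le> t * f u y + (1 - t) * f v y + lam / 2 * t * (1 - t) * (norm (u - v))\<^sup>2"
          using wcf y u v t unfolding wc_def by blast
        have B: "\<bar>t * (f u y - fh u y) + (1 - t) * (f v y - fh v y) - (f (t *\<^sub>R u + (1 - t) *\<^sub>R v) y - fh (t *\<^sub>R u + (1 - t) *\<^sub>R v) y)\<bar>
           \<le> \<tau> * Dm ^ k / fact k * (t * (1 - t) * (norm (u - v))\<^sup>2)"
          unfolding fh_def by (rule P3_Rwc[OF convX intX convY intY diam A2_ex A3_ex A3_lip tau_nn yhat u v y t])
        show "fh (t *\<^sub>R u + (1 - t) *\<^sub>R v) y \<le> t * fh u y + (1 - t) * fh v y + lb / 2 * t * (1 - t) * (norm (u - v))\<^sup>2"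
          by (rule arith_wc[OF A B lbk])
      qed
    qed
  qed
  have wc\<psi>: "wc X \<psi> lam" unfolding \<psi>_def by (rule wc_primal[OF convX ne_Y wcf]) (auto intro: bddf)
  have wc\<psi>h: "wc X \<psi>h lb" unfolding \<psi>h_def by (rule wc_primal[OF convX ne_Y wcfh]) (auto intro: bddh)
  have pclose: "\<forall>a\<in>X. \<bar>\<psi> a - \<psi>h a\<bar> \<le> \<delta>"
  proof
    fix a assume a: "a \<in> X"
    show "\<bar>\<psi> a - \<psi>h a\<bar> \<le> \<delta>" unfolding \<psi>_def \<psi>h_def
      by (rule primal_close[of Y f a fh \<delta>, OF ne_Y bddf[OF a] bddh[OF a]]) (use close a in blast)
  qed
  have low\<psi>: "\<forall>u\<in>X. f xs yhat + Gx xs yhat \<bullet> (u - xs) - lam / 2 * (norm (u - xs))\<^sup>2 \<le> \<psi> u"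
  proof
    fix u assume u: "u \<in> X"
    have dh: "\<forall>x\<in>X. ((\<lambda>x. f x yhat) has_derivative (\<lambda>d. Gx x yhat \<bullet> d)) (at x within X)"
      using A1_grad yhat unfolding x_grad_def by auto
    have lip: "\<forall>x\<in>X. \<forall>x'\<in>X. norm (Gx x' yhat - Gx x yhat) \<le> lam * norm (x' - x)"
      using A1_lip yhat by fastforce
    have "\<bar>f u yhat - f xs yhat - Gx xs yhat \<bullet> (u - xs)\<bar> \<le> lam / 2 * (norm (u - xs))\<^sup>2"
      by (rule descent[OF convX dh lip u xsX])
    moreover have "f u yhat \<le> \<psi> u" unfolding \<psi>_def primal_def by (rule cSUP_upper[OF yhat bddf[OF u]])
    ultimately show "f xs yhat + Gx xs yhat \<bullet> (u - xs) - lam / 2 * (norm (u - xs))\<^sup>2 \<le> \<psi> u" by linarith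
  qed
  have low\<psi>h: "\<forall>u\<in>X. (f xs yhat - \<delta>) + Gx xs yhat \<bullet> (u - xs) - lam / 2 * (norm (u - xs))\<^sup>2 \<le> \<psi>h u"
    using low\<psi> pclose by fastforce
  have lam_l: "lam < l" using lb_ge lam_pos by (simp add: l_def)
  have lb_l: "lb < l" using lb_pos by (simp add: l_def)
  have bb\<psi>: "bdd_below ((\<lambda>u. \<psi> u + l / 2 * (norm (u - xs))\<^sup>2) ` X)"
    by (rule bdd_below_quad[OF lam_l low\<psi>])
  have bb\<psi>h: "bdd_below ((\<lambda>u. \<psi>h u + l / 2 * (norm (u - xs))\<^sup>2) ` X)"
    by (rule bdd_below_quad[OF lam_l low\<psi>h])
  obtain p us where us: "\<forall>n. us n \<in> X" "us \<longlonglongrightarrow> p"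
      "(\<lambda>n. \<psi> (us n) + l / 2 * (norm (us n - xs))\<^sup>2) \<longlonglongrightarrow> moreau X \<psi> l xs"
      "\<forall>u\<in>X. moreau X \<psi> l xs + (l - lam) / 2 * (norm (u - p))\<^sup>2 \<le> \<psi> u + l / 2 * (norm (u - xs))\<^sup>2"
      "(moreau X \<psi> l has_derivative (\<lambda>h. (l *\<^sub>R (xs - p)) \<bullet> h)) (at xs)"
    using moreau_main[OF convX ne_X wc\<psi> lam_l bb\<psi>] by blast
  obtain q vs where vs: "\<forall>n. vs n \<in> X" "vs \<longlonglongrightarrow> q"
      "(\<lambda>n. \<psi>h (vs n) + l / 2 * (norm (vs n - xs))\<^sup>2) \<longlonglongrightarrow> moreau X \<psi>h l xs"
      "\<forall>u\<in>X. moreau X \<psi>h l xs + (l - lb) / 2 * (norm (u - q))\<^sup>2 \<le> \<psi>h u + l / 2 * (norm (u - xs))\<^sup>2"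
      "(moreau X \<psi>h l has_derivative (\<lambda>h. (l *\<^sub>R (xs - q)) \<bullet> h)) (at xs)"
    using moreau_main[OF convX ne_X wc\<psi>h lb_l bb\<psi>h] by blast
  obtain Gh where Gh: "(moreau X \<psi>h l has_derivative (\<lambda>h. Gh \<bullet> h)) (at xs)" "norm Gh \<le> eps / 6"
    using fosp' unfolding is_fosp_def \<psi>h_def by blast
  have eqf: "(\<lambda>h. Gh \<bullet> h) = (\<lambda>h. (l *\<^sub>R (xs - q)) \<bullet> h)" by (rule has_derivative_unique[OF Gh(1) vs(5)])
  have Ghq: "Gh = l *\<^sub>R (xs - q)"
  proof (rule inner_ext)
    fix b show "Gh \<bullet> b = (l *\<^sub>R (xs - q)) \<bullet> b" using fun_cong[OF eqf, of b] by simp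
  qed
  define r where "r = norm (p - q)"
  have r0: "r \<ge> 0" by (simp add: r_def)
  have nG: "norm (l *\<^sub>R (xs - p)) \<le> norm Gh + 2 * lb * r"
  proof -
    have e: "l *\<^sub>R (xs - p) = Gh + l *\<^sub>R (q - p)" unfolding Ghq by (simp add: algebra_simps)
    have "norm (l *\<^sub>R (xs - p)) \<le> norm Gh + norm (l *\<^sub>R (q - p))" unfolding e by (rule norm_triangle_ineq)
    also have "norm (l *\<^sub>R (q - p)) = 2 * lb * r" using l_pos by (simp add: r_def l_def norm_minus_commute)
    finally show ?thesis .
  qed
  have mm: "lb * r\<^sup>2 \<le> ((l - lam) + (l - lb)) / 2 * r\<^sup>2"
    using lb_ge by (intro mult_right_mono) (auto simp: l_def)
  have cmpL: "lb * r\<^sup>2 \<le> L * r" if H: "\<forall>a\<in>X. \<forall>b\<in>X. (\<psi> a - \<psi>h a) - (\<psi> b - \<psi>h b) \<le> L * norm (a - b)" for L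
    using compareL[OF us(1,2,3) vs(1,2,3) us(4) vs(4) H] mm unfolding r_def by linarith
  have cmpD: "lb * r\<^sup>2 \<le> 2 * \<delta>"
    using compareD[OF us(1,2,3) vs(1,2,3) us(4) vs(4) pclose] mm unfolding r_def by linarith
  have lipH: "\<forall>a\<in>X. \<forall>b\<in>X. (\<psi> a - \<psi>h a) - (\<psi> b - \<psi>h b) \<le> L * norm (a - b)"
    if H: "\<forall>a\<in>X. \<forall>b\<in>X. \<forall>y\<in>Y. \<forall>y'\<in>Y. f a y + fh b y' \<le> f b y + fh a y' + L * norm (a - b)" for L
  proof (intro ballI)
    fix a b assume a: "a \<in> X" and b: "b \<in> X"
    show "(\<psi> a - \<psi>h a) - (\<psi> b - \<psi>h b) \<le> L * norm (a - b)"
      unfolding \<psi>_def \<psi>h_def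
      by (rule primal_lipdiff[of Y f a b fh, OF ne_Y bddf[OF a] bddf[OF b] bddh[OF a] bddh[OF b]]) (use H a b in blast)
  qed
  have sqrt_case: "x \<le> (eps / 24)\<^sup>2" if "sqrt x \<le> eps / 24" "x \<ge> 0" for x
  proof -
    have "x = (sqrt x)\<^sup>2" using that by simp
    also have "\<dots> \<le> (eps / 24)\<^sup>2" using that by (intro power_mono) auto
    finally show ?thesis .
  qed
  have key: "\<exists>L. (lb * r\<^sup>2 \<le> L * r \<and> L \<le> eps / 24) \<or> (lb * r\<^sup>2 \<le> 2 * \<delta> \<and> lb * \<delta> \<le> 50 * (eps / 24)\<^sup>2)"
  proof (cases "k = 0")
    case True
    have lb0: "lb = lam" using True by (simp add: lb_def)
    have d0: "\<delta> = \<rho> * Dm" using True by (simp add: \<delta>_def)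
    have "min (\<mu> * Dm) (min (2 * \<sigma>) (sqrt (lam * \<rho> * Dm / 50))) \<le> eps / 24" using cond0 True by blast
    then consider "\<mu> * Dm \<le> eps / 24" | "2 * \<sigma> \<le> eps / 24" | "sqrt (lam * \<rho> * Dm / 50) \<le> eps / 24"
      by linarith
    then show ?thesis
    proof cases
      case 1
      have "\<forall>a\<in>X. \<forall>b\<in>X. \<forall>y\<in>Y. \<forall>y'\<in>Y. f a y + fh b y' \<le> f b y + fh a y' + (\<mu> * Dm) * norm (a - b)"
      proof (intro ballI)
        fix a b y y' assume a: "a \<in> X" and b: "b \<in> X" and y: "y \<in> Y" and y': "y' \<in> Y"
        have "\<bar>(f a y - f b y) - (f a yhat - f b yhat)\<bar> \<le> \<mu> * Dm * norm (a - b)"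
          by (rule P4_mu[OF convX A1_grad A1_lip diam mu_nn a b y yhat])
        then show "f a y + fh b y' \<le> f b y + fh a y' + (\<mu> * Dm) * norm (a - b)"
          using fh0[OF True a, of y'] fh0[OF True b, of y'] by linarith
      qed
      then show ?thesis using cmpL[OF lipH] 1 by blast
    next
      case 2
      have "\<forall>a\<in>X. \<forall>b\<in>X. \<forall>y\<in>Y. \<forall>y'\<in>Y. f a y + fh b y' \<le> f b y + fh a y' + (2 * \<sigma>) * norm (a - b)"
      proof (intro ballI)
        fix a b y y' assume a: "a \<in> X" and b: "b \<in> X" and y: "y \<in> Y" and y': "y' \<in> Y"
        have s1: "\<bar>f a y - f b y\<bar> \<le> \<sigma> * norm (a - b)"
        proof -
          have "\<bar>D 0 a y [] - D 0 b y []\<bar> \<le> tnorm 0 (\<lambda>vs. D 0 a y vs - D 0 b y vs)"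
            using tnorm0[of "\<lambda>vs. D 0 a y vs - D 0 b y vs"] by simp
          also have "\<dots> \<le> \<rho> * norm (y - y) + \<sigma> * norm (a - b)"
            using A2_lip[rule_format, of b a y y] a b y True by simp
          finally show ?thesis using A2_ex a b y unfolding y_derivs_def by simp
        qed
        have s2: "\<bar>f b yhat - f a yhat\<bar> \<le> \<sigma> * norm (a - b)"
        proof -
          have "\<bar>D 0 b yhat [] - D 0 a yhat []\<bar> \<le> tnorm 0 (\<lambda>vs. D 0 b yhat vs - D 0 a yhat vs)"
            using tnorm0[of "\<lambda>vs. D 0 b yhat vs - D 0 a yhat vs"] by simp
          also have "\<dots> \<le> \<rho> * norm (yhat - yhat) + \<sigma> * norm (b - a)"
            using A2_lip[rule_format, of a b yhat yhat] a b yhat True by simp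
          finally show ?thesis using A2_ex a b yhat unfolding y_derivs_def by (simp add: norm_minus_commute)
        qed
        show "f a y + fh b y' \<le> f b y + fh a y' + (2 * \<sigma>) * norm (a - b)"
          using fh0[OF True a, of y'] fh0[OF True b, of y'] s1 s2 by linarith
      qed
      then show ?thesis using cmpL[OF lipH] 2 by blast
    next
      case 3
      have "lam * \<rho> * Dm / 50 \<le> (eps / 24)\<^sup>2" using sqrt_case[OF 3] lam_pos rho_nn Dm0 by simp
      then have "lb * \<delta> \<le> 50 * (eps / 24)\<^sup>2" unfolding lb0 d0 by (simp add: mult.assoc)
      then show ?thesis using cmpD by blast
    qed
  next
    case False
    then have k1: "k \<ge> 1" by simp
    have lbk: "lb = lam + 2 * \<tau> * Dm ^ k / fact k" using k1 by (simp add: lb_def)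
    have "min (\<mu> * Dm + 2 * \<sigma> * Dm ^ k / fact k)
              (sqrt ((lam + 2 * \<tau> * Dm ^ k / fact k) * \<rho> * Dm ^ (k + 1) / (50 * fact (k + 1)))) \<le> eps / 24"
      using cond1 k1 by blast
    then consider "\<mu> * Dm + 2 * \<sigma> * Dm ^ k / fact k \<le> eps / 24"
      | "sqrt ((lam + 2 * \<tau> * Dm ^ k / fact k) * \<rho> * Dm ^ (k + 1) / (50 * fact (k + 1))) \<le> eps / 24"
      by linarith
    then show ?thesis
    proof cases
      case 1
      have "\<forall>a\<in>X. \<forall>b\<in>X. \<forall>y\<in>Y. \<forall>y'\<in>Y. f a y + fh b y' \<le> f b y + fh a y' + (\<mu> * Dm + 2 * \<sigma> * Dm ^ k / fact k) * norm (a - b)"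
      proof (intro ballI)
        fix a b y y' assume a: "a \<in> X" and b: "b \<in> X" and y: "y \<in> Y" and y': "y' \<in> Y"
        have s1: "\<bar>(f a y - f b y) - (f a y' - f b y')\<bar> \<le> \<mu> * Dm * norm (a - b)"
          by (rule P4_mu[OF convX A1_grad A1_lip diam mu_nn a b y y'])
        have s2: "\<bar>(f a y' - fh a y') - (f b y' - fh b y')\<bar> \<le> 2 * \<sigma> * Dm ^ k / fact k * norm (a - b)"
          unfolding fh_def by (rule P2_Rlip[OF convY intY diam A2_ex A2_lip sigma_nn yhat a b y'])
        have e: "(\<mu> * Dm + 2 * \<sigma> * Dm ^ k / fact k) * norm (a - b) = \<mu> * Dm * norm (a - b) + 2 * \<sigma> * Dm ^ k / fact k * norm (a - b)"
          by (simp add: algebra_simps)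
        show "f a y + fh b y' \<le> f b y + fh a y' + (\<mu> * Dm + 2 * \<sigma> * Dm ^ k / fact k) * norm (a - b)"
          using s1 s2 e by linarith
      qed
      then show ?thesis using cmpL[OF lipH] 1 by blast
    next
      case 2
      have x0: "(lam + 2 * \<tau> * Dm ^ k / fact k) * \<rho> * Dm ^ (k + 1) / (50 * fact (k + 1)) \<ge> 0"
        using lb_pos lbk rho_nn Dm0 by simp
      have "(lam + 2 * \<tau> * Dm ^ k / fact k) * \<rho> * Dm ^ (k + 1) / (50 * fact (k + 1)) \<le> (eps / 24)\<^sup>2"
        using sqrt_case[OF 2 x0] .
      moreover have "(lam + 2 * \<tau> * Dm ^ k / fact k) * \<rho> * Dm ^ (k + 1) / (50 * fact (k + 1)) = lb * \<delta> / 50"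
      proof -
        have gen: "\<And>A B C E :: real. A * B * C / (50 * E) = A * (B * C / E) / 50" by (simp add: field_simps)
        show ?thesis unfolding lbk \<delta>_def by (rule gen)
      qed
      ultimately have "lb * \<delta> \<le> 50 * (eps / 24)\<^sup>2" by linarith
      then show ?thesis using cmpD by blast
    qed
  qed
  then obtain L where cases: "(lb * r\<^sup>2 \<le> L * r \<and> L \<le> eps / 24) \<or> (lb * r\<^sup>2 \<le> 2 * \<delta> \<and> lb * \<delta> \<le> 50 * (eps / 24)\<^sup>2)"
    by blast
  have "norm (l *\<^sub>R (xs - p)) \<le> eps"
    by (rule final_num[OF lb_pos r0 Gh(2) norm_ge_zero nG cases])
  then have "is_fosp X Y f eps l xs" unfolding is_fosp_def using xsX us(5) unfolding \<psi>_def by blast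
  then show ?thesis unfolding l_def lb_def .
qed


end
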